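(* Consider the finite-sum setting with $n\ge2$, assume (A1) and (A2), and run ProxSARAH with full-gradient snapshots $v_0^{(s)}=\nabla f(w_0^{(s)})$, inner batch size $1\le\hat b\le\sqrt n$, epoch length $m=\lfloor n/\hat b\rfloor$, and constant step-sizes $$\gamma_t=\gamma:=\frac1{L\sqrt{\omega m}},\quad \eta_t=\eta:=\frac{2\sqrt{\omega m}}{4\sqrt{\omega m}+1},\quad \omega:=\frac{3(n-\hat b)}{2\hat b(n-1)},$$ assuming $\gamma\le1$. Let $\tilde w_T$ be drawn uniformly from $\{w_t^{(s)}:s=1,\dots,S,\ t=0,\dots,m\}$. Then $$\mathbb{E}\|G_\eta(\tilde w_T)\|^2=\frac{1}{(m+1)S}\sum_{s=1}^S\sum_{t=0}^m\mathbb{E}\|G_\eta(w_t^{(s)})\|^2\le\frac{2}{\gamma\eta^2(m+1)S}\big[F(\tilde w_0)-F^\star\big],$$ and there is an absolute constant $C>0$ (independent of $n,\hat b,L,S,F$) such that the right-hand side is at most $\frac{C L[F(\tilde w_0)-F^\star]}{S\sqrt n}$. Consequently, with $S=\lceil CL[F(\tilde w_0)-F^\star]/(\sqrt n\varepsilon^2)\rceil$ one gets $\mathbb{E}\|G_\eta(\tilde w_T)\|^2\le\varepsilon^2$ using $\mathcal{O}\big(n+\sqrt n L[F(\tilde w_0)-F^\star]\varepsilon^{-2}\big)$ evaluations of individual gradients $\nabla f_i$ and $S(m+1)$ proximal operations.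
   Context: Setting. $\psi:\mathbb{R}^d\to\mathbb{R}\cup\{+\infty\}$ is proper, closed and convex, with $\mathrm{prox}_{\eta\psi}(w):=\arg\min_z\{\eta\psi(z)+\frac12\|z-w\|^2\}$. Finite-sum setting: $f=\frac1n\sum_{i=1}^nf_i$ with $n\ge2$ and each $f_i:\mathbb{R}^d\to\mathbb{R}$ continuously differentiable. $F:=f+\psi$. Gradient mapping: $G_\eta(w):=\frac1\eta\big(w-\mathrm{prox}_{\eta\psi}(w-\eta\nabla f(w))\big)$. (A1): $F^\star:=\inf_wF(w)>-\infty$ and $\mathrm{dom}\,F\neq\emptyset$. (A2) ($L$-average smoothness): $\frac1n\sum_{i=1}^n\|\nabla f_i(w)-\nabla f_i(\hat w)\|^2\le L^2\|w-\hat w\|^2$ for all $w,\hat w$. ProxSARAH: inputs $\tilde w_0\in\mathbb{R}^d$, integers $S,m\ge1$, inner batch size $\hat b\ge1$, step-sizes $\eta_t>0$, $\gamma_t\in(0,1]$ ($t=0,\dots,m$, the same in every outer iteration). For $s=1,\dots,S$: set $w_0^{(s)}:=\tilde w_{s-1}$; form a snapshot estimator $v_0^{(s)}$; set $\hat w_1^{(s)}:=\mathrm{prox}_{\eta_0\psi}(w_0^{(s)}-\eta_0v_0^{(s)})$, $w_1^{(s)}:=(1-\gamma_0)w_0^{(s)}+\gamma_0\hat w_1^{(s)}$; for $t=1,\dots,m$: draw a uniformly random subset $\hat{\mathcal B}_t^{(s)}\subset\{1,\dots,n\}$ of size $\hat b$ independent of all previous randomness, set $v_t^{(s)}:=v_{t-1}^{(s)}+\frac1{\hat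 b}\sum_{i\in\hat{\mathcal B}_t^{(s)}}[\nabla f_i(w_t^{(s)})-\nabla f_i(w_{t-1}^{(s)})]$, $\hat w_{t+1}^{(s)}:=\mathrm{prox}_{\eta_t\psi}(w_t^{(s)}-\eta_tv_t^{(s)})$, $w_{t+1}^{(s)}:=(1-\gamma_t)w_t^{(s)}+\gamma_t\hat w_{t+1}^{(s)}$. Finally $\tilde w_s:=w_{m+1}^{(s)}$. $\mathbb{E}$ denotes total expectation over all randomness. *)

theory Defs
  imports "HOL-Analysis.Analysis" "HOL-Probability.Probability"
begin

text \<open>Proper closed convex psi : R^d -> R \<union> {+\<infinity>} is represented by its effective
  domain D (nonempty, convex) and its finite values psi on D; closedness = closed epigraph.\<close>

definition prox :: "'a::euclidean_space set \<Rightarrow> ('a \<Rightarrow> real) \<Rightarrow> real \<Rightarrow> 'a \<Rightarrow> 'a" where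
  "prox D psi eta w = (THE z. z \<in> D \<and>
     (\<forall>y\<in>D. eta * psi z + (1/2) * (norm (z - w))\<^sup>2 \<le> eta * psi y + (1/2) * (norm (y - w))\<^sup>2))"

definition fullgrad :: "nat \<Rightarrow> (nat \<Rightarrow> 'a \<Rightarrow> 'a::real_vector) \<Rightarrow> 'a \<Rightarrow> 'a" where
  "fullgrad n gf w = (1 / real n) *\<^sub>R (\<Sum>i<n. gf i w)"

definition grad_map :: "'a::euclidean_space set \<Rightarrow> ('a \<Rightarrow> real) \<Rightarrow> nat \<Rightarrow> (nat \<Rightarrow> 'a \<Rightarrow> 'a) \<Rightarrow> real \<Rightarrow> 'a \<Rightarrow> 'a" where
  "grad_map D psi n gf eta w = (1 / eta) *\<^sub>R (w - prox D psi eta (w - eta *\<^sub>R fullgrad n gf w))"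

fun sarah_inner :: "'a::euclidean_space set \<Rightarrow> ('a \<Rightarrow> real) \<Rightarrow> nat \<Rightarrow> (nat \<Rightarrow> 'a \<Rightarrow> 'a) \<Rightarrow> nat
     \<Rightarrow> (nat \<Rightarrow> real) \<Rightarrow> (nat \<Rightarrow> real) \<Rightarrow> (nat \<Rightarrow> nat set) \<Rightarrow> 'a \<Rightarrow> nat \<Rightarrow> 'a \<times> 'a" where
  "sarah_inner D psi n gf b eta gam B w0 0 = (w0, fullgrad n gf w0)"
| "sarah_inner D psi n gf b eta gam B w0 (Suc t) =
     (let (w, v) = sarah_inner D psi n gf b eta gam B w0 t;
          w' = (1 - gam t) *\<^sub>R w + gam t *\<^sub>R prox D psi (eta t) (w - eta t *\<^sub>R v)
      in (w', v + (1 / real b) *\<^sub>R (\<Sum>i\<in>B (Suc t). gf i w' - gf i w)))"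

text \<open>Snapshot points tilde w_s; beta (s,t) is the inner batch of step t in outer iteration s.\<close>
fun sarah_snap :: "'a::euclidean_space set \<Rightarrow> ('a \<Rightarrow> real) \<Rightarrow> nat \<Rightarrow> (nat \<Rightarrow> 'a \<Rightarrow> 'a) \<Rightarrow> nat
     \<Rightarrow> (nat \<Rightarrow> real) \<Rightarrow> (nat \<Rightarrow> real) \<Rightarrow> nat \<Rightarrow> (nat \<times> nat \<Rightarrow> nat set) \<Rightarrow> 'a \<Rightarrow> nat \<Rightarrow> 'a" where
  "sarah_snap D psi n gf b eta gam m beta w0 0 = w0"
| "sarah_snap D psi n gf b eta gam m beta w0 (Suc s) =
     fst (sarah_inner D psi n gf b eta gam (\<lambda>t. beta (Suc s, t))
            (sarah_snap D psi n gf b eta gam m beta w0 s) (Suc m))"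

text \<open>Iterate w_t^(s), for s \<ge> 1.\<close>
definition sarah_iter :: "'a::euclidean_space set \<Rightarrow> ('a \<Rightarrow> real) \<Rightarrow> nat \<Rightarrow> (nat \<Rightarrow> 'a \<Rightarrow> 'a) \<Rightarrow> nat
     \<Rightarrow> (nat \<Rightarrow> real) \<Rightarrow> (nat \<Rightarrow> real) \<Rightarrow> nat \<Rightarrow> (nat \<times> nat \<Rightarrow> nat set) \<Rightarrow> 'a \<Rightarrow> nat \<Rightarrow> nat \<Rightarrow> 'a" where
  "sarah_iter D psi n gf b eta gam m beta w0 s t =
     fst (sarah_inner D psi n gf b eta gam (\<lambda>t. beta (s, t))
            (sarah_snap D psi n gf b eta gam m beta w0 (s - 1)) t)"

text \<open>All possible realisations of the inner batches: for each s = 1..S, t = 1..m an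
  independent uniformly random subset of {0..n-1} of size b (indices are 0-based).\<close>
definition batch_space :: "nat \<Rightarrow> nat \<Rightarrow> nat \<Rightarrow> nat \<Rightarrow> (nat \<times> nat \<Rightarrow> nat set) set" where
  "batch_space n b S m = ({1..S} \<times> {1..m}) \<rightarrow>\<^sub>E {B. B \<subseteq> {..<n} \<and> card B = b}"

definition ps_omega :: "nat \<Rightarrow> nat \<Rightarrow> real" where
  "ps_omega n b = 3 * (real n - real b) / (2 * real b * (real n - 1))"

definition ps_gamma :: "real \<Rightarrow> nat \<Rightarrow> nat \<Rightarrow> real" where
  "ps_gamma L n b = 1 / (L * sqrt (ps_omega n b * real (n div b)))"

definition ps_eta :: "nat \<Rightarrow> nat \<Rightarrow> real" where
  "ps_eta n b = 2 * sqrt (ps_omega n b * real (n div b)) / (4 * sqrt (ps_omega n b * real (n div b)) + 1)"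

end

theory Submission
  imports Defs
begin


lemma lsc_bdd_below_compact:
  fixes psi :: "'a::euclidean_space \<Rightarrow> real"
  assumes cl: "closed {(x, t). x \<in> D \<and> psi x \<le> t}" and K: "compact K"
  shows "\<exists>M. \<forall>x\<in>D \<inter> K. M \<le> psi x"
proof (rule ccontr)
  assume nb: "\<not> ?thesis"
  let ?E = "{(x, t). x \<in> D \<and> psi x \<le> t}"
  define A where "A k = (\<lambda>x. (x, - real k)) -` ?E" for k :: nat
  have clA: "closed (A k)" for k
    unfolding A_def by (rule closed_vimage[OF cl]) (intro continuous_intros)
  have "K \<inter> \<Inter> (A ` UNIV) \<noteq> {}"
  proof (rule compact_imp_fip_image[OF K])
    fix I' :: "nat set" assume fI: "finite I'"
    from nb have "\<exists>x\<in>D \<inter> K. psi x < - real (Max (insert 0 I'))"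
      by (meson not_le)
    then obtain x where x: "x \<in> D" "x \<in> K" "psi x < - real (Max (insert 0 I'))" by auto
    have "x \<in> A j" if "j \<in> I'" for j
    proof -
      have "j \<le> Max (insert 0 I')" using fI that by auto
      then show ?thesis using x unfolding A_def by auto
    qed
    then show "K \<inter> \<Inter> (A ` I') \<noteq> {}" using x by auto
  qed (use clA in auto)
  then obtain x where x: "\<And>k. x \<in> A k" by auto
  obtain k :: nat where "k > - psi x" using reals_Archimedean2 by blast
  with x[of k] show False unfolding A_def by auto
qed

lemma convex_linear_lower:
  fixes psi :: "'a::euclidean_space \<Rightarrow> real"
  assumes cl: "closed {(x, t). x \<in> D \<and> psi x \<le> t}" and cv: "convex_on D psi"
    and z0: "z0 \<in> D"
  shows "\<exists>K0\<ge>0. \<forall>z\<in>D. psi z \<ge> - K0 * (1 + norm (z - z0))"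
proof -
  obtain M where M: "\<And>x. x \<in> D \<Longrightarrow> x \<in> cball z0 1 \<Longrightarrow> M \<le> psi x"
    using lsc_bdd_below_compact[OF cl compact_cball[of z0 1]] by (metis IntI)
  define K0 where "K0 = \<bar>M\<bar> + \<bar>psi z0\<bar>"
  have "psi z \<ge> - K0 * (1 + norm (z - z0))" if z: "z \<in> D" for z
  proof (cases "norm (z - z0) \<le> 1")
    case True
    then have "M \<le> psi z" using M[OF z] by (simp add: dist_norm norm_minus_commute)
    moreover have "- K0 * (1 + norm (z - z0)) \<le> - \<bar>M\<bar>"
      unfolding K0_def by (simp add: algebra_simps)
    ultimately show ?thesis by linarith
  next
    case False
    define R where "R = norm (z - z0)"
    have R1: "R > 1" using False R_def by auto
    define y where "y = (1 - 1/R) *\<^sub>R z0 + (1/R) *\<^sub>R z"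
    have yD: "y \<in> D" unfolding y_def
      using cv z z0 R1 unfolding convex_on_def convex_def by auto
    have "y - z0 = (1/R) *\<^sub>R (z - z0)" unfolding y_def by (simp add: algebra_simps)
    then have "norm (y - z0) = (1/R) * R" unfolding R_def by simp
    then have "norm (y - z0) = 1" using R1 by simp
    then have My: "M \<le> psi y" using M[OF yD] by (simp add: dist_norm norm_minus_commute)
    have "psi y \<le> (1 - 1/R) * psi z0 + (1/R) * psi z"
      unfolding y_def using convex_onD[OF cv, of "1/R" z0 z] R1 z z0 by auto
    then have "R * M \<le> R * ((1 - 1/R) * psi z0 + (1/R) * psi z)" using My R1
      by (intro mult_left_mono) auto
    also have "\<dots> = (R - 1) * psi z0 + psi z" using R1 by (simp add: field_simps)
    finally have "R * M \<le> (R - 1) * psi z0 + psi z" .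
    then have "psi z \<ge> R * M - (R - 1) * psi z0" by linarith
    moreover have "R * M - (R - 1) * psi z0 \<ge> - K0 * R"
    proof -
      have "R * (- \<bar>M\<bar>) \<le> R * M" using R1 by (intro mult_left_mono) auto
      moreover have "(R - 1) * psi z0 \<le> (R - 1) * \<bar>psi z0\<bar>" using R1 by (intro mult_left_mono) auto
      moreover have "(R - 1) * \<bar>psi z0\<bar> \<le> R * \<bar>psi z0\<bar>" by (simp add: algebra_simps)
      ultimately show ?thesis unfolding K0_def by (simp add: algebra_simps)
    qed
    moreover have "- K0 * R \<ge> - K0 * (1 + R)" unfolding K0_def by (simp add: algebra_simps)
    ultimately show ?thesis unfolding R_def by linarith
  qed
  moreover have "K0 \<ge> 0" unfolding K0_def by simp
  ultimately show ?thesis by blast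
qed

lemma prox_min_exists:
  fixes psi :: "'a::euclidean_space \<Rightarrow> real"
  assumes cl: "closed {(x, t). x \<in> D \<and> psi x \<le> t}" and cv: "convex_on D psi"
    and ne: "D \<noteq> {}" and eta: "eta > 0"
  shows "\<exists>p\<in>D. \<forall>y\<in>D. eta * psi p + (1/2) * (norm (p - u))\<^sup>2 \<le> eta * psi y + (1/2) * (norm (y - u))\<^sup>2"
proof -
  let ?E = "{(x, t). x \<in> D \<and> psi x \<le> t}"
  define Phi where "Phi y = eta * psi y + (1/2) * (norm (y - u))\<^sup>2" for y
  obtain z0 where z0: "z0 \<in> D" using ne by auto
  obtain K0 where K0: "K0 \<ge> 0" "\<And>z. z \<in> D \<Longrightarrow> psi z \<ge> - K0 * (1 + norm (z - z0))"
    using convex_linear_lower[OF cl cv z0] by auto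
  define A where "A = \<bar>Phi z0\<bar> + eta * K0 * (1 + norm (u - z0))"
  define R where "R = 2 * eta * K0 + 2 + A + norm (z0 - u)"
  define T where "T = Phi z0 / eta"
  define lo where "lo = - K0 * (1 + R + norm (u - z0))"
  define C where "C = ?E \<inter> (cball u R \<times> {lo..T})"
  have A0: "A \<ge> 0" unfolding A_def using K0 eta by simp
  have lo_le: "lo \<le> psi z" if "z \<in> D" "norm (z - u) \<le> R" for z
  proof -
    have "norm (z - z0) \<le> norm (z - u) + norm (u - z0)" using norm_triangle_ineq[of "z - u" "u - z0"] by simp
    then have "1 + norm (z - z0) \<le> 1 + R + norm (u - z0)" using that by linarith
    then have "K0 * (1 + norm (z - z0)) \<le> K0 * (1 + R + norm (u - z0))"
      using K0 by (intro mult_left_mono) auto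
    then show ?thesis using K0(2)[OF that(1)] unfolding lo_def by linarith
  qed
  have psiz0T: "psi z0 \<le> T" unfolding T_def Phi_def using eta by (simp add: field_simps)
  have z0R: "norm (z0 - u) \<le> R" unfolding R_def using A0 K0 eta by simp
  have z0C: "(z0, psi z0) \<in> C" unfolding C_def using z0 psiz0T z0R lo_le[OF z0 z0R]
    by (auto simp: dist_norm norm_minus_commute)
  have compC: "compact C" unfolding C_def
    by (intro closed_Int_compact cl compact_Times compact_cball compact_Icc)
  have "continuous_on C (\<lambda>p. eta * snd p + (1/2) * (norm (fst p - u))\<^sup>2)"
    by (intro continuous_intros)
  then obtain pt where ptC: "pt \<in> C" and ptmin:
    "\<And>q. q \<in> C \<Longrightarrow> eta * snd pt + (1/2) * (norm (fst pt - u))\<^sup>2 \<le> eta * snd q + (1/2) * (norm (fst q - u))\<^sup>2"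
    using continuous_attains_inf[OF compC] z0C by blast
  obtain p t where pt: "pt = (p, t)" by force
  have pD: "p \<in> D" and pt_le: "psi p \<le> t" using ptC pt unfolding C_def by auto
  have Phip: "Phi p \<le> eta * t + (1/2) * (norm (p - u))\<^sup>2"
    unfolding Phi_def using pt_le eta by simp
  have Phip_z0: "Phi p \<le> Phi z0"
    using Phip ptmin[OF z0C] pt unfolding Phi_def by simp
  have "Phi p \<le> Phi y" if yD: "y \<in> D" for y
  proof (cases "norm (y - u) \<le> R")
    case yR: True
    show ?thesis
    proof (cases "psi y \<le> T")
      case True
      then have "(y, psi y) \<in> C" unfolding C_def using yD yR lo_le[OF yD yR]
        by (auto simp: dist_norm norm_minus_commute)
      from ptmin[OF this] Phip pt show ?thesis unfolding Phi_def by simp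
    next
      case False
      then have "eta * psi y > Phi z0" unfolding T_def using eta by (simp add: field_simps)
      moreover have "(norm (y - u))\<^sup>2 \<ge> 0" by simp
      ultimately have "Phi y > Phi z0" unfolding Phi_def by linarith
      then show ?thesis using Phip_z0 by linarith
    qed
  next
    case False
    define r where "r = norm (y - u)"
    have rR: "r > R" using False r_def by auto
    have "norm (y - z0) \<le> r + norm (u - z0)" unfolding r_def using norm_triangle_ineq[of "y - u" "u - z0"] by simp
    then have "K0 * (1 + norm (y - z0)) \<le> K0 * (1 + r + norm (u - z0))"
      using K0 by (intro mult_left_mono) auto
    then have "psi y \<ge> - K0 * (1 + r + norm (u - z0))" using K0(2)[OF yD] by linarith
    then have "eta * psi y \<ge> eta * (- K0 * (1 + r + norm (u - z0)))"
      using eta by (intro mult_left_mono) auto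
    then have P1: "Phi y \<ge> - eta * K0 * (1 + norm (u - z0)) + (r * ((1/2) * r - eta * K0))"
      unfolding Phi_def r_def[symmetric] by (simp add: algebra_simps power2_eq_square)
    have "(1/2) * r - eta * K0 \<ge> 1" using rR norm_ge_zero[of "z0 - u"] A0 mult.assoc[of 2 eta K0] unfolding R_def by linarith
    moreover have "r \<ge> A"
    proof -
      have "2 * eta * K0 \<ge> 0" using K0 eta by simp
      then show ?thesis using rR norm_ge_zero[of "z0 - u"] unfolding R_def by linarith
    qed
    ultimately have "r * ((1/2) * r - eta * K0) \<ge> A * 1" using A0
      by (intro mult_mono) auto
    then have "Phi y \<ge> \<bar>Phi z0\<bar>" using P1 unfolding A_def by simp
    then show ?thesis using Phip_z0 by linarith
  qed
  then show ?thesis using pD unfolding Phi_def by blast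
qed

lemma norm_sq_expand:
  fixes a b :: "'a::real_inner"
  shows "(norm (a + c *\<^sub>R b))\<^sup>2 = (norm a)\<^sup>2 + 2 * c * (a \<bullet> b) + c\<^sup>2 * (norm b)\<^sup>2"
  by (simp only: power2_norm_eq_inner) (simp add: inner_add_left inner_add_right inner_commute algebra_simps power2_eq_square)

lemma min_VI:
  fixes psi :: "'a::euclidean_space \<Rightarrow> real"
  assumes cv: "convex_on D psi" and pD: "p \<in> D" and eta: "eta \<ge> 0"
    and pmin: "\<forall>y\<in>D. eta * psi p + (1/2) * (norm (p - u))\<^sup>2 \<le> eta * psi y + (1/2) * (norm (y - u))\<^sup>2"
    and yD: "y \<in> D"
  shows "(u - p) \<bullet> (y - p) \<le> eta * (psi y - psi p)"
proof (rule ccontr)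
  define a where "a = eta * (psi y - psi p) - (u - p) \<bullet> (y - p)"
  define q where "q = (norm (y - p))\<^sup>2"
  assume "\<not> ?thesis"
  then have a0: "a < 0" unfolding a_def by simp
  have q0: "q \<ge> 0" unfolding q_def by simp
  have key: "0 \<le> a + lam * q / 2" if l0: "0 < lam" and l1: "lam \<le> 1" for lam
  proof -
    define yl where "yl = (1 - lam) *\<^sub>R p + lam *\<^sub>R y"
    have ylD: "yl \<in> D" unfolding yl_def using cv pD yD l0 l1
      unfolding convex_on_def convex_def by auto
    have psil: "psi yl \<le> (1 - lam) * psi p + lam * psi y"
      unfolding yl_def using convex_onD[OF cv, of lam p y] l0 l1 pD yD by auto
    have yle: "yl - u = (p - u) + lam *\<^sub>R (y - p)" unfolding yl_def by (simp add: algebra_simps)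
    have nl: "(norm (yl - u))\<^sup>2 = (norm (p - u))\<^sup>2 + 2 * lam * ((p - u) \<bullet> (y - p)) + lam\<^sup>2 * q"
      unfolding q_def yle by (rule norm_sq_expand)
    have "eta * psi p + (1/2) * (norm (p - u))\<^sup>2 \<le> eta * psi yl + (1/2) * (norm (yl - u))\<^sup>2"
      using pmin ylD by auto
    also have "\<dots> \<le> eta * ((1 - lam) * psi p + lam * psi y) + (1/2) * (norm (yl - u))\<^sup>2"
      using psil eta by (simp add: mult_left_mono)
    finally have "eta * psi p + (1/2) * (norm (p - u))\<^sup>2 \<le> eta * ((1 - lam) * psi p + lam * psi y)
       + (1/2) * ((norm (p - u))\<^sup>2 + 2 * lam * ((p - u) \<bullet> (y - p)) + lam\<^sup>2 * q)" unfolding nl .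
    moreover have "(p - u) \<bullet> (y - p) = - ((u - p) \<bullet> (y - p))"
      by (simp add: inner_diff_left)
    ultimately have "0 \<le> lam * (a + lam * q / 2)" unfolding a_def
      by (simp add: algebra_simps power2_eq_square)
    then show ?thesis using l0 by (simp add: zero_le_mult_iff)
  qed
  define lam where "lam = min 1 (- a / (q + 1))"
  have l0: "lam > 0" unfolding lam_def using a0 q0 by (simp add: field_simps)
  have l1: "lam \<le> 1" unfolding lam_def by simp
  have "lam * q \<le> (- a / (q + 1)) * q" unfolding lam_def using q0 by (intro mult_right_mono) auto
  also have "\<dots> < - a" using a0 q0 by (simp add: field_simps)
  finally have "lam * q / 2 < - a" using a0 by linarith
  with key[OF l0 l1] show False by linarith
qed

lemma VI_nonexp:
  fixes p1 p2 u1 u2 :: "'a::euclidean_space"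
  assumes v1: "(u1 - p1) \<bullet> (p2 - p1) \<le> eta * (psi p2 - psi p1)"
    and v2: "(u2 - p2) \<bullet> (p1 - p2) \<le> eta * (psi p1 - psi p2)"
  shows "norm (p1 - p2) \<le> norm (u1 - u2)"
proof -
  have e: "(u1 - p1) \<bullet> (p2 - p1) + (u2 - p2) \<bullet> (p1 - p2) = (norm (p1 - p2))\<^sup>2 - (u1 - u2) \<bullet> (p1 - p2)"
    by (simp add: power2_norm_eq_inner inner_diff_left inner_diff_right inner_commute algebra_simps)
  have "(norm (p1 - p2))\<^sup>2 \<le> (u1 - u2) \<bullet> (p1 - p2)" using v1 v2 e by (simp add: algebra_simps)
  also have "\<dots> \<le> norm (u1 - u2) * norm (p1 - p2)" by (rule norm_cauchy_schwarz)
  finally have h: "norm (p1 - p2) * norm (p1 - p2) \<le> norm (u1 - u2) * norm (p1 - p2)"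
    by (simp add: power2_eq_square)
  show ?thesis
  proof (cases "norm (p1 - p2) = 0")
    case True then show ?thesis by simp
  next
    case False then have "norm (p1 - p2) > 0" by simp
    with h show ?thesis by simp
  qed
qed

lemma prox_char:
  fixes psi :: "'a::euclidean_space \<Rightarrow> real"
  assumes cl: "closed {(x, t). x \<in> D \<and> psi x \<le> t}" and cv: "convex_on D psi"
    and ne: "D \<noteq> {}" and eta: "eta > 0"
  shows "prox D psi eta u \<in> D \<and> (\<forall>y\<in>D. (u - prox D psi eta u) \<bullet> (y - prox D psi eta u)
            \<le> eta * (psi y - psi (prox D psi eta u)))"
proof -
  obtain p where pD: "p \<in> D" and pmin: "\<forall>y\<in>D. eta * psi p + (1/2) * (norm (p - u))\<^sup>2 \<le> eta * psi y + (1/2) * (norm (y - u))\<^sup>2"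
    using prox_min_exists[OF cl cv ne eta] by blast
  have vp: "\<forall>y\<in>D. (u - p) \<bullet> (y - p) \<le> eta * (psi y - psi p)"
    using min_VI[OF cv pD _ pmin] eta by auto
  have "prox D psi eta u = p" unfolding prox_def
  proof (rule the_equality)
    show "p \<in> D \<and> (\<forall>y\<in>D. eta * psi p + 1 / 2 * (norm (p - u))\<^sup>2 \<le> eta * psi y + 1 / 2 * (norm (y - u))\<^sup>2)"
      using pD pmin by blast
  next
    fix z assume z: "z \<in> D \<and> (\<forall>y\<in>D. eta * psi z + 1 / 2 * (norm (z - u))\<^sup>2 \<le> eta * psi y + 1 / 2 * (norm (y - u))\<^sup>2)"
    then have vz: "\<forall>y\<in>D. (u - z) \<bullet> (y - z) \<le> eta * (psi y - psi z)"
      using min_VI[OF cv _ _ ] eta by auto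
    have "norm (z - p) \<le> norm (u - u)"
      by (rule VI_nonexp[of u z p eta psi u]) (use vz vp pD z in auto)
    then show "z = p" by simp
  qed
  then show ?thesis using pD vp by simp
qed


lemma descent_lemma:
  fixes F :: "'a::euclidean_space \<Rightarrow> real"
  assumes d: "\<And>x. (F has_derivative (\<lambda>h. G x \<bullet> h)) (at x)"
    and lip: "\<And>x y. norm (G x - G y) \<le> L * norm (x - y)"
  shows "F y \<le> F x + G x \<bullet> (y - x) + L / 2 * (norm (y - x))\<^sup>2"
proof -
  define h where "h = y - x"
  define g where "g t = F (x + t *\<^sub>R h) - t * (G x \<bullet> h) - L / 2 * t\<^sup>2 * (norm h)\<^sup>2" for t :: real
  have "g 1 \<le> g 0"
  proof (rule DERIV_nonpos_imp_nonincreasing[of 0 1 g])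
    fix t :: real assume t0: "0 \<le> t" and t1: "t \<le> 1"
    have d1: "((\<lambda>t. x + t *\<^sub>R h) has_derivative (\<lambda>s. s *\<^sub>R h)) (at t)"
      by (auto intro!: derivative_eq_intros)
    have d2: "((\<lambda>t. F (x + t *\<^sub>R h)) has_derivative (\<lambda>s. G (x + t *\<^sub>R h) \<bullet> (s *\<^sub>R h))) (at t)"
      using has_derivative_compose[OF d1 d] by simp
    have d3: "((\<lambda>t. F (x + t *\<^sub>R h)) has_real_derivative (G (x + t *\<^sub>R h) \<bullet> h)) (at t)"
    proof -
      have "(\<lambda>s. G (x + t *\<^sub>R h) \<bullet> (s *\<^sub>R h)) = (*) (G (x + t *\<^sub>R h) \<bullet> h)"
        by (auto simp: fun_eq_iff mult.commute)
      then show ?thesis unfolding has_field_derivative_def using d2 by simp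
    qed
    have dg: "(g has_real_derivative (G (x + t *\<^sub>R h) \<bullet> h - G x \<bullet> h - L * t * (norm h)\<^sup>2)) (at t)"
      unfolding g_def by (auto intro!: derivative_eq_intros d3)
    have "G (x + t *\<^sub>R h) \<bullet> h - G x \<bullet> h = (G (x + t *\<^sub>R h) - G x) \<bullet> h" by (simp add: inner_diff_left)
    also have "\<dots> \<le> norm (G (x + t *\<^sub>R h) - G x) * norm h" by (rule norm_cauchy_schwarz)
    also have "\<dots> \<le> (L * norm (t *\<^sub>R h)) * norm h" using lip[of "x + t *\<^sub>R h" x]
      by (intro mult_right_mono) auto
    also have "\<dots> = L * t * (norm h)\<^sup>2" using t0 by (simp add: power2_eq_square)
    finally show "\<exists>y. (g has_real_derivative y) (at t) \<and> y \<le> 0" using dg by (intro exI[of _ _]) auto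
  qed simp
  then show ?thesis unfolding g_def h_def by simp
qed

lemma norm_sum_sq_le:
  fixes a :: "nat \<Rightarrow> 'a::real_normed_vector"
  shows "(norm (\<Sum>i<n. a i))\<^sup>2 \<le> real n * (\<Sum>i<n. (norm (a i))\<^sup>2)"
proof -
  have "norm (\<Sum>i<n. a i) \<le> (\<Sum>i<n. norm (a i))" by (rule norm_sum)
  then have "(norm (\<Sum>i<n. a i))\<^sup>2 \<le> (\<Sum>i<n. norm (a i))\<^sup>2"
    by (intro power_mono) auto
  also have "\<dots> \<le> (\<Sum>i<n. (norm (a i))\<^sup>2) * real (card {..<n})" by (rule sum_squared_le_sum_of_squares)
  finally show ?thesis by (simp add: mult.commute)
qed

lemma fullgrad_lip:
  fixes gf :: "nat \<Rightarrow> 'a::euclidean_space \<Rightarrow> 'a"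
  assumes n: "n \<ge> 1" and A2: "\<forall>w w'. (\<Sum>i<n. (norm (gf i w - gf i w'))\<^sup>2) / real n \<le> L\<^sup>2 * (norm (w - w'))\<^sup>2"
    and L: "L \<ge> 0"
  shows "norm (fullgrad n gf w - fullgrad n gf w') \<le> L * norm (w - w')"
proof -
  have e: "fullgrad n gf w - fullgrad n gf w' = (1 / real n) *\<^sub>R (\<Sum>i<n. gf i w - gf i w')"
    unfolding fullgrad_def by (simp add: sum_subtractf scaleR_diff_right)
  have "(norm (fullgrad n gf w - fullgrad n gf w'))\<^sup>2 = (norm (\<Sum>i<n. gf i w - gf i w'))\<^sup>2 / (real n)\<^sup>2"
    unfolding e using n by (simp add: power_divide)
  also have "\<dots> \<le> real n * (\<Sum>i<n. (norm (gf i w - gf i w'))\<^sup>2) / (real n)\<^sup>2"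
    by (intro divide_right_mono norm_sum_sq_le) simp
  also have "\<dots> = (\<Sum>i<n. (norm (gf i w - gf i w'))\<^sup>2) / real n" using n by (simp add: power2_eq_square)
  also have "\<dots> \<le> (L * norm (w - w'))\<^sup>2" using A2 by (simp add: power_mult_distrib)
  finally show ?thesis using L by (simp add: power2_le_iff_abs_le)
qed

lemma fbar_deriv:
  fixes f :: "nat \<Rightarrow> 'a::euclidean_space \<Rightarrow> real"
  assumes grad: "\<forall>i<n. \<forall>x. (f i has_derivative (\<lambda>h. gf i x \<bullet> h)) (at x)"
  shows "((\<lambda>w. (\<Sum>i<n. f i w) / real n) has_derivative (\<lambda>h. fullgrad n gf x \<bullet> h)) (at x)"
proof -
  have "((\<lambda>w. \<Sum>i<n. f i w) has_derivative (\<lambda>h. \<Sum>i<n. gf i x \<bullet> h)) (at x)"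
    using grad by (intro has_derivative_sum) auto
  from has_derivative_mult_right[OF this, of "1 / real n"]
  have "((\<lambda>w. (\<Sum>i<n. f i w) / real n) has_derivative (\<lambda>h. (\<Sum>i<n. gf i x \<bullet> h) / real n)) (at x)"
    by simp
  moreover have "(\<lambda>h. (\<Sum>i<n. gf i x \<bullet> h) / real n) = (\<lambda>h. fullgrad n gf x \<bullet> h)"
    unfolding fullgrad_def by (auto simp: inner_sum_left)
  ultimately show ?thesis by simp
qed


lemma subsets_insert_image:
  assumes fA: "finite A" and iA: "i \<in> A" and k: "k \<ge> 1" and iT: "i \<notin> T"
  shows "{B. B \<subseteq> A \<and> card B = k \<and> insert i T \<subseteq> B}
       = insert i ` {C. C \<subseteq> A - {i} \<and> card C = k - 1 \<and> T \<subseteq> C}"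
    and "inj_on (insert i) {C. C \<subseteq> A - {i} \<and> card C = k - 1 \<and> T \<subseteq> C}"
proof -
  show "{B. B \<subseteq> A \<and> card B = k \<and> insert i T \<subseteq> B}
       = insert i ` {C. C \<subseteq> A - {i} \<and> card C = k - 1 \<and> T \<subseteq> C}"
  proof (intro equalityI subsetI)
    fix B assume "B \<in> {B. B \<subseteq> A \<and> card B = k \<and> insert i T \<subseteq> B}"
    then have B: "B \<subseteq> A" "card B = k" "insert i T \<subseteq> B" by auto
    have fB: "finite B" using B(1) fA finite_subset by blast
    have "B = insert i (B - {i})" using B(3) by auto
    moreover have "B - {i} \<in> {C. C \<subseteq> A - {i} \<and> card C = k - 1 \<and> T \<subseteq> C}"
      using B fB iT by (auto simp: card_Diff_singleton)
    ultimately show "B \<in> insert i ` {C. C \<subseteq> A - {i} \<and> card C = k - 1 \<and> T \<subseteq> C}" by blast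
  next
    fix B assume "B \<in> insert i ` {C. C \<subseteq> A - {i} \<and> card C = k - 1 \<and> T \<subseteq> C}"
    then obtain C where C: "C \<subseteq> A - {i}" "card C = k - 1" "T \<subseteq> C" and BC: "B = insert i C" by auto
    have fC: "finite C" using C(1) fA finite_subset by blast
    have "card B = k" using BC C fC k by (auto simp: card_insert_if)
    then show "B \<in> {B. B \<subseteq> A \<and> card B = k \<and> insert i T \<subseteq> B}" using BC C iA by auto
  qed
  show "inj_on (insert i) {C. C \<subseteq> A - {i} \<and> card C = k - 1 \<and> T \<subseteq> C}"
  proof (rule inj_onI)
    fix C1 C2 assume "C1 \<in> {C. C \<subseteq> A - {i} \<and> card C = k - 1 \<and> T \<subseteq> C}"
      "C2 \<in> {C. C \<subseteq> A - {i} \<and> card C = k - 1 \<and> T \<subseteq> C}" "insert i C1 = insert i C2"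
    then show "C1 = C2" by (metis (no_types, lifting) Diff_insert_absorb Diff_subset_conv mem_Collect_eq subset_Diff_insert)
  qed
qed

lemma card_sub_contain1:
  assumes "i < n" "1 \<le> b"
  shows "card {B. B \<subseteq> {..<n} \<and> card B = b \<and> i \<in> B} = (n - 1) choose (b - 1)"
proof -
  have "{B. B \<subseteq> {..<n} \<and> card B = b \<and> i \<in> B} = {B. B \<subseteq> {..<n} \<and> card B = b \<and> insert i {} \<subseteq> B}"
    by auto
  also have "card \<dots> = card {C. C \<subseteq> {..<n} - {i} \<and> card C = b - 1 \<and> {} \<subseteq> C}"
    using subsets_insert_image[of "{..<n}" i b "{}"] assms by (simp add: card_image)
  also have "\<dots> = (n - 1) choose (b - 1)" using n_subsets[of "{..<n} - {i}" "b - 1"] assms by simp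
  finally show ?thesis .
qed

lemma card_sub_contain2:
  assumes "i < n" "j < n" "i \<noteq> j" "1 \<le> b"
  shows "card {B. B \<subseteq> {..<n} \<and> card B = b \<and> i \<in> B \<and> j \<in> B} = (if b \<ge> 2 then (n - 2) choose (b - 2) else 0)"
proof -
  have "{B. B \<subseteq> {..<n} \<and> card B = b \<and> i \<in> B \<and> j \<in> B} = {B. B \<subseteq> {..<n} \<and> card B = b \<and> insert i {j} \<subseteq> B}"
    by auto
  also have "card \<dots> = card {C. C \<subseteq> {..<n} - {i} \<and> card C = b - 1 \<and> {j} \<subseteq> C}"
    using subsets_insert_image[of "{..<n}" i b "{j}"] assms by (simp add: card_image)
  also have "\<dots> = (if b \<ge> 2 then (n - 2) choose (b - 2) else 0)"
  proof (cases "b \<ge> 2")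
    case True
    have jA: "j \<in> {..<n} - {i}" using assms by auto
    have "card {C. C \<subseteq> {..<n} - {i} \<and> card C = b - 1 \<and> {j} \<subseteq> C} = card {C'. C' \<subseteq> {..<n} - {i} - {j} \<and> card C' = b - 1 - 1 \<and> {} \<subseteq> C'}"
      using subsets_insert_image[of "{..<n} - {i}" j "b - 1" "{}"] jA True by (simp add: card_image)
    also have "\<dots> = (n - 2) choose (b - 2)"
    proof -
      have c1: "card ({..<n} - {i}) = n - 1" using assms by simp
      have "card ({..<n} - {i} - {j}) = n - 1 - 1" using jA c1 by (simp add: card_Diff_singleton)
      then have "card ({..<n} - {i} - {j}) = n - 2" by simp
      moreover have "b - 1 - 1 = b - 2" by simp
      ultimately show ?thesis using n_subsets[of "{..<n} - {i} - {j}" "b - 1 - 1"] by simp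
    qed
    finally show ?thesis using True by simp
  next
    case False
    then have "b = 1" using assms by simp
    then have "{C. C \<subseteq> {..<n} - {i} \<and> card C = b - 1 \<and> {j} \<subseteq> C} = {}"
      by (auto simp: card_eq_0_iff dest: finite_subset)
    then show ?thesis using False by simp
  qed
  finally show ?thesis .
qed

lemma finite_Bs: fixes n b :: nat shows "finite {B. B \<subseteq> {..<n} \<and> card B = b}"
proof -
  have "{B. B \<subseteq> {..<n} \<and> card B = b} \<subseteq> Pow {..<n}" by auto
  then show ?thesis by (rule finite_subset) simp
qed

lemma sum_in_subset_restrict:
  fixes g :: "nat \<Rightarrow> 'b::comm_monoid_add"
  assumes "B \<subseteq> {..<n}"
  shows "(\<Sum>i\<in>B. g i) = (\<Sum>i<n. if i \<in> B then g i else 0)"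
proof -
  have "{..<n} \<inter> B = B" using assms by auto
  then show ?thesis using sum.inter_restrict[of "{..<n}" g B] by simp
qed

lemma sum_subsets_1:
  fixes g :: "nat \<Rightarrow> 'b::real_vector"
  shows "(\<Sum>B\<in>{B. B \<subseteq> {..<n} \<and> card B = b}. \<Sum>i\<in>B. g i)
       = (\<Sum>i<n. real (card {B. B \<subseteq> {..<n} \<and> card B = b \<and> i \<in> B}) *\<^sub>R g i)"
proof -
  let ?Bs = "{B. B \<subseteq> {..<n} \<and> card B = b}"
  have "(\<Sum>B\<in>?Bs. \<Sum>i\<in>B. g i) = (\<Sum>B\<in>?Bs. \<Sum>i<n. if i \<in> B then g i else 0)"
    by (intro sum.cong refl sum_in_subset_restrict) auto
  also have "\<dots> = (\<Sum>i<n. \<Sum>B\<in>?Bs. if i \<in> B then g i else 0)" by (rule sum.swap)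
  also have "\<dots> = (\<Sum>i<n. real (card {B. B \<subseteq> {..<n} \<and> card B = b \<and> i \<in> B}) *\<^sub>R g i)"
  proof (intro sum.cong refl)
    fix i
    have "(\<Sum>B\<in>?Bs. if i \<in> B then g i else 0) = (\<Sum>B\<in>{B \<in> ?Bs. i \<in> B}. g i)"
      by (rule sum.inter_filter[symmetric]) (rule finite_Bs)
    also have "{B \<in> ?Bs. i \<in> B} = {B. B \<subseteq> {..<n} \<and> card B = b \<and> i \<in> B}" by auto
    finally show "(\<Sum>B\<in>?Bs. if i \<in> B then g i else 0) = real (card {B. B \<subseteq> {..<n} \<and> card B = b \<and> i \<in> B}) *\<^sub>R g i"
      by (simp add: sum_constant_scaleR)
  qed
  finally show ?thesis .
qed

lemma sum_subsets_2:
  fixes h :: "nat \<Rightarrow> nat \<Rightarrow> real"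
  shows "(\<Sum>B\<in>{B. B \<subseteq> {..<n} \<and> card B = b}. \<Sum>i\<in>B. \<Sum>j\<in>B. h i j)
       = (\<Sum>i<n. \<Sum>j<n. real (card {B. B \<subseteq> {..<n} \<and> card B = b \<and> i \<in> B \<and> j \<in> B}) * h i j)"
proof -
  let ?Bs = "{B. B \<subseteq> {..<n} \<and> card B = b}"
  have "(\<Sum>B\<in>?Bs. \<Sum>i\<in>B. \<Sum>j\<in>B. h i j) = (\<Sum>B\<in>?Bs. \<Sum>i<n. \<Sum>j<n. if i \<in> B \<and> j \<in> B then h i j else 0)"
  proof (rule sum.cong[OF refl])
    fix B assume "B \<in> ?Bs"
    then have B: "B \<subseteq> {..<n}" by auto
    have "(\<Sum>i\<in>B. \<Sum>j\<in>B. h i j) = (\<Sum>i<n. if i \<in> B then (\<Sum>j\<in>B. h i j) else 0)"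
      by (rule sum_in_subset_restrict[OF B])
    also have "\<dots> = (\<Sum>i<n. if i \<in> B then (\<Sum>j<n. if j \<in> B then h i j else 0) else 0)"
    proof (intro sum.cong refl)
      fix i show "(if i \<in> B then sum (h i) B else 0) = (if i \<in> B then (\<Sum>j<n. if j \<in> B then h i j else 0) else 0)"
        using sum_in_subset_restrict[OF B, of "h i"] by simp
    qed
    also have "\<dots> = (\<Sum>i<n. \<Sum>j<n. if i \<in> B \<and> j \<in> B then h i j else 0)"
      by (intro sum.cong refl) auto
    finally show "(\<Sum>i\<in>B. \<Sum>j\<in>B. h i j) = (\<Sum>i<n. \<Sum>j<n. if i \<in> B \<and> j \<in> B then h i j else 0)" .
  qed
  also have "\<dots> = (\<Sum>i<n. \<Sum>B\<in>?Bs. \<Sum>j<n. if i \<in> B \<and> j \<in> B then h i j else 0)" by (rule sum.swap)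
  also have "\<dots> = (\<Sum>i<n. \<Sum>j<n. \<Sum>B\<in>?Bs. if i \<in> B \<and> j \<in> B then h i j else 0)"
    by (intro sum.cong refl sum.swap)
  also have "\<dots> = (\<Sum>i<n. \<Sum>j<n. real (card {B. B \<subseteq> {..<n} \<and> card B = b \<and> i \<in> B \<and> j \<in> B}) * h i j)"
  proof (intro sum.cong refl)
    fix i j
    have "(\<Sum>B\<in>?Bs. if i \<in> B \<and> j \<in> B then h i j else 0) = (\<Sum>B\<in>{B \<in> ?Bs. i \<in> B \<and> j \<in> B}. h i j)"
      by (rule sum.inter_filter[symmetric]) (rule finite_Bs)
    also have "{B \<in> ?Bs. i \<in> B \<and> j \<in> B} = {B. B \<subseteq> {..<n} \<and> card B = b \<and> i \<in> B \<and> j \<in> B}" by auto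
    finally show "(\<Sum>B\<in>?Bs. if i \<in> B \<and> j \<in> B then h i j else 0) = real (card {B. B \<subseteq> {..<n} \<and> card B = b \<and> i \<in> B \<and> j \<in> B}) * h i j"
      by simp
  qed
  finally show ?thesis .
qed

lemma norm_sq_expand2:
  fixes a b :: "'a::real_inner"
  shows "(norm (a + c *\<^sub>R b))\<^sup>2 = (norm a)\<^sup>2 + 2 * c * (a \<bullet> b) + c\<^sup>2 * (norm b)\<^sup>2"
  by (simp only: power2_norm_eq_inner) (simp add: inner_add_left inner_add_right inner_commute algebra_simps power2_eq_square)

lemma norm_sum_sq_inner:
  fixes Y :: "nat \<Rightarrow> 'a::real_inner"
  shows "(norm (\<Sum>i\<in>B. Y i))\<^sup>2 = (\<Sum>i\<in>B. \<Sum>j\<in>B. Y i \<bullet> Y j)"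
  unfolding power2_norm_eq_inner inner_sum_left inner_sum_right by (rule sum.swap)

lemma sample_var:
  fixes e :: "'a::real_inner" and D :: "nat \<Rightarrow> 'a" and n b :: nat
  assumes n: "n \<ge> 2" and b1: "1 \<le> b" and bn: "b \<le> n"
  shows "(\<Sum>B\<in>{B. B \<subseteq> {..<n} \<and> card B = b}. (norm (e + (1/real b) *\<^sub>R (\<Sum>i\<in>B. D i) - (1/real n) *\<^sub>R (\<Sum>i<n. D i)))\<^sup>2)
            / real (card {B. B \<subseteq> {..<n} \<and> card B = b})
         \<le> (norm e)\<^sup>2 + (real n - real b) / (real b * (real n - 1)) * ((\<Sum>i<n. (norm (D i))\<^sup>2) / real n)"
proof -
  define Bs where "Bs = {B. B \<subseteq> {..<n} \<and> card B = b}"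
  define mu where "mu = (1/real n) *\<^sub>R (\<Sum>i<n. D i)"
  define Y where "Y i = D i - mu" for i
  define c1 where "c1 = (n - 1) choose (b - 1)"
  define c2 where "c2 = (if b \<ge> 2 then (n - 2) choose (b - 2) else 0)"
  define N where "N = n choose b"
  have cardBs: "card Bs = N" unfolding Bs_def N_def using n_subsets[of "{..<n}" b] by simp
  have Npos: "N > 0" unfolding N_def using bn by simp
  have id1: "real n * real c1 = real b * real N"
  proof -
    have "Suc (n - 1) * ((n - 1) choose (b - 1)) = (Suc (n - 1) choose Suc (b - 1)) * Suc (b - 1)"
      by (rule Suc_times_binomial_eq)
    moreover have "Suc (n - 1) = n" "Suc (b - 1) = b" using n b1 by auto
    ultimately have "n * c1 = N * b" unfolding c1_def N_def by simp
    then show ?thesis by (metis of_nat_mult mult.commute)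
  qed
  have id2: "(real n - 1) * real c2 = (real b - 1) * real c1"
  proof (cases "b \<ge> 2")
    case True
    have "Suc (n - 2) * ((n - 2) choose (b - 2)) = (Suc (n - 2) choose Suc (b - 2)) * Suc (b - 2)"
      by (rule Suc_times_binomial_eq)
    moreover have "Suc (n - 2) = n - 1" "Suc (b - 2) = b - 1" using n True by auto
    ultimately have "(n - 1) * c2 = c1 * (b - 1)" unfolding c1_def c2_def using True by simp
    then have "real ((n - 1) * c2) = real (c1 * (b - 1))" by simp
    then show ?thesis using n True by (simp add: of_nat_diff mult.commute)
  next
    case False then have "b = 1" using b1 by simp
    then show ?thesis unfolding c2_def by simp
  qed
  have sumY: "(\<Sum>i<n. Y i) = 0"
    unfolding Y_def mu_def using n by (simp add: sum_subtractf sum_constant_scaleR)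
  have SB: "(1/real b) *\<^sub>R (\<Sum>i\<in>B. D i) - mu = (1/real b) *\<^sub>R (\<Sum>i\<in>B. Y i)" if "B \<in> Bs" for B
  proof -
    have "card B = b" using that unfolding Bs_def by auto
    then have "(\<Sum>i\<in>B. Y i) = (\<Sum>i\<in>B. D i) - real b *\<^sub>R mu" unfolding Y_def by (simp add: sum_subtractf sum_constant_scaleR)
    then show ?thesis using b1 by (simp add: scaleR_diff_right)
  qed
  have trm: "(norm (e + (1/real b) *\<^sub>R (\<Sum>i\<in>B. D i) - (1/real n) *\<^sub>R (\<Sum>i<n. D i)))\<^sup>2
      = (norm e)\<^sup>2 + 2 * (1/real b) * (e \<bullet> (\<Sum>i\<in>B. Y i)) + (1/real b)\<^sup>2 * (\<Sum>i\<in>B. \<Sum>j\<in>B. Y i \<bullet> Y j)"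
    if "B \<in> Bs" for B
  proof -
    have "e + (1/real b) *\<^sub>R (\<Sum>i\<in>B. D i) - (1/real n) *\<^sub>R (\<Sum>i<n. D i) = e + ((1/real b) *\<^sub>R (\<Sum>i\<in>B. D i) - mu)"
      unfolding mu_def by (simp add: algebra_simps)
    also have "\<dots> = e + (1/real b) *\<^sub>R (\<Sum>i\<in>B. Y i)" using SB[OF that] by simp
    finally have eq: "e + (1/real b) *\<^sub>R (\<Sum>i\<in>B. D i) - (1/real n) *\<^sub>R (\<Sum>i<n. D i) = e + (1/real b) *\<^sub>R (\<Sum>i\<in>B. Y i)" .
    show ?thesis by (simp only: eq norm_sq_expand2 norm_sum_sq_inner)
  qed
  have s1: "(\<Sum>B\<in>Bs. \<Sum>i\<in>B. Y i) = 0"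
  proof -
    have "(\<Sum>B\<in>Bs. \<Sum>i\<in>B. Y i) = (\<Sum>i<n. real c1 *\<^sub>R Y i)"
      unfolding Bs_def sum_subsets_1 c1_def
    proof (intro sum.cong refl)
      fix i assume "i \<in> {..<n}"
      then show "real (card {B. B \<subseteq> {..<n} \<and> card B = b \<and> i \<in> B}) *\<^sub>R Y i = real (n - 1 choose (b - 1)) *\<^sub>R Y i"
        using card_sub_contain1[of i n b] b1 by simp
    qed
    also have "\<dots> = real c1 *\<^sub>R (\<Sum>i<n. Y i)" by (simp add: scaleR_sum_right)
    finally show ?thesis using sumY by simp
  qed
  define Q where "Q = (\<Sum>i<n. (norm (Y i))\<^sup>2)"
  have s2: "(\<Sum>B\<in>Bs. \<Sum>i\<in>B. \<Sum>j\<in>B. Y i \<bullet> Y j) = (real c1 - real c2) * Q"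
  proof -
    have "(\<Sum>B\<in>Bs. \<Sum>i\<in>B. \<Sum>j\<in>B. Y i \<bullet> Y j) = (\<Sum>i<n. \<Sum>j<n. (real c2 + (if j = i then real c1 - real c2 else 0)) * (Y i \<bullet> Y j))"
      unfolding Bs_def sum_subsets_2
    proof (intro sum.cong refl)
      fix i j assume i: "i \<in> {..<n}" and j: "j \<in> {..<n}"
      show "real (card {B. B \<subseteq> {..<n} \<and> card B = b \<and> i \<in> B \<and> j \<in> B}) * (Y i \<bullet> Y j)
           = (real c2 + (if j = i then real c1 - real c2 else 0)) * (Y i \<bullet> Y j)"
      proof (cases "j = i")
        case True then show ?thesis using card_sub_contain1[of i n b] i b1 unfolding c1_def by simp
      next
        case False then show ?thesis using card_sub_contain2[of i n j b] i j b1 unfolding c2_def by simp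
      qed
    qed
    also have "\<dots> = (\<Sum>i<n. real c2 * (\<Sum>j<n. Y i \<bullet> Y j) + (real c1 - real c2) * (Y i \<bullet> Y i))"
    proof (rule sum.cong[OF refl])
      fix i assume i: "i \<in> {..<n}"
      have "(\<Sum>j<n. (real c2 + (if j = i then real c1 - real c2 else 0)) * (Y i \<bullet> Y j))
          = (\<Sum>j<n. real c2 * (Y i \<bullet> Y j) + (if j = i then (real c1 - real c2) * (Y i \<bullet> Y j) else 0))"
        by (intro sum.cong refl) (auto simp: algebra_simps)
      also have "\<dots> = real c2 * (\<Sum>j<n. Y i \<bullet> Y j) + (\<Sum>j<n. if j = i then (real c1 - real c2) * (Y i \<bullet> Y j) else 0)"
        by (simp add: sum.distrib sum_distrib_left)
      also have "(\<Sum>j<n. if j = i then (real c1 - real c2) * (Y i \<bullet> Y j) else 0) = (real c1 - real c2) * (Y i \<bullet> Y i)"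
        using i by (simp add: sum.delta)
      finally show "(\<Sum>j<n. (real c2 + (if j = i then real c1 - real c2 else 0)) * (Y i \<bullet> Y j))
          = real c2 * (\<Sum>j<n. Y i \<bullet> Y j) + (real c1 - real c2) * (Y i \<bullet> Y i)" .
    qed
    also have "\<dots> = real c2 * (\<Sum>i<n. Y i \<bullet> (\<Sum>j<n. Y j)) + (real c1 - real c2) * Q"
      unfolding Q_def by (simp add: sum.distrib sum_distrib_left inner_sum_right power2_norm_eq_inner)
    also have "\<dots> = (real c1 - real c2) * Q" using sumY by simp
    finally show ?thesis .
  qed
  have tot: "(\<Sum>B\<in>Bs. (norm (e + (1/real b) *\<^sub>R (\<Sum>i\<in>B. D i) - (1/real n) *\<^sub>R (\<Sum>i<n. D i)))\<^sup>2)
      = real N * (norm e)\<^sup>2 + (1/real b)\<^sup>2 * ((real c1 - real c2) * Q)"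
  proof -
    have "(\<Sum>B\<in>Bs. (norm (e + (1/real b) *\<^sub>R (\<Sum>i\<in>B. D i) - (1/real n) *\<^sub>R (\<Sum>i<n. D i)))\<^sup>2)
      = (\<Sum>B\<in>Bs. (norm e)\<^sup>2 + 2 * (1/real b) * (e \<bullet> (\<Sum>i\<in>B. Y i)) + (1/real b)\<^sup>2 * (\<Sum>i\<in>B. \<Sum>j\<in>B. Y i \<bullet> Y j))"
      by (intro sum.cong refl trm)
    also have "\<dots> = real (card Bs) * (norm e)\<^sup>2 + 2 * (1/real b) * (e \<bullet> (\<Sum>B\<in>Bs. \<Sum>i\<in>B. Y i))
        + (1/real b)\<^sup>2 * (\<Sum>B\<in>Bs. \<Sum>i\<in>B. \<Sum>j\<in>B. Y i \<bullet> Y j)"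
      by (simp add: sum.distrib sum_distrib_left inner_sum_right)
    finally show ?thesis using s1 s2 cardBs by simp
  qed
  have Qle: "Q \<le> (\<Sum>i<n. (norm (D i))\<^sup>2)"
  proof -
    have "Q = (\<Sum>i<n. (norm (D i))\<^sup>2 - 2 * (D i \<bullet> mu) + (norm mu)\<^sup>2)"
      unfolding Q_def Y_def by (intro sum.cong refl) (simp add: power2_norm_eq_inner inner_diff_left inner_diff_right inner_commute)
    also have "\<dots> = (\<Sum>i<n. (norm (D i))\<^sup>2) - 2 * ((\<Sum>i<n. D i) \<bullet> mu) + real n * (norm mu)\<^sup>2"
      by (simp add: sum.distrib sum_subtractf sum_distrib_left inner_sum_left)
    also have "(\<Sum>i<n. D i) = real n *\<^sub>R mu" unfolding mu_def using n by simp
    finally have "Q = (\<Sum>i<n. (norm (D i))\<^sup>2) - real n * (norm mu)\<^sup>2"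
      by (simp add: power2_norm_eq_inner)
    then show ?thesis by simp
  qed
  have Q0: "Q \<ge> 0" unfolding Q_def by (simp add: sum_nonneg)
  have coef: "(1/real b)\<^sup>2 * (real c1 - real c2) / real N = (real n - real b) / (real b * (real n - 1)) / real n"
  proof -
    have n1: "real n - 1 > 0" using n by simp
    have n0: "real n > 0" using n by simp
    have c1e: "real c1 = real b * real N / real n" using id1 n0 by (simp add: field_simps)
    have c2e: "real c2 = (real b - 1) * real c1 / (real n - 1)" using id2 n1 by (simp add: field_simps)
    have d: "real c1 - real c2 = real b * real N * (real n - real b) / (real n * (real n - 1))"
      unfolding c2e unfolding c1e using n1 n0 by (simp add: field_simps)
    show ?thesis unfolding d using Npos n1 b1 n by (simp add: field_simps power2_eq_square)
  qed
  have "(\<Sum>B\<in>Bs. (norm (e + (1/real b) *\<^sub>R (\<Sum>i\<in>B. D i) - (1/real n) *\<^sub>R (\<Sum>i<n. D i)))\<^sup>2) / real (card Bs)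
      = (norm e)\<^sup>2 + (real n - real b) / (real b * (real n - 1)) / real n * Q"
  proof -
    have "(real N * (norm e)\<^sup>2 + (1/real b)\<^sup>2 * ((real c1 - real c2) * Q)) / real N
        = (norm e)\<^sup>2 + ((1/real b)\<^sup>2 * (real c1 - real c2) / real N) * Q"
    proof -
      have NN: "real N \<noteq> 0" using Npos by simp
      have "(real N * (norm e)\<^sup>2 + (1/real b)\<^sup>2 * ((real c1 - real c2) * Q)) / real N
          = real N * (norm e)\<^sup>2 / real N + (1/real b)\<^sup>2 * ((real c1 - real c2) * Q) / real N"
        by (rule add_divide_distrib)
      also have "real N * (norm e)\<^sup>2 / real N = (norm e)\<^sup>2" using NN by simp
      also have "(1/real b)\<^sup>2 * ((real c1 - real c2) * Q) / real N = ((1/real b)\<^sup>2 * (real c1 - real c2) / real N) * Q"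
        by simp
      finally show ?thesis .
    qed
    then show ?thesis unfolding tot cardBs coef .
  qed
  also have "\<dots> \<le> (norm e)\<^sup>2 + (real n - real b) / (real b * (real n - 1)) / real n * (\<Sum>i<n. (norm (D i))\<^sup>2)"
    using Qle bn n by (intro add_left_mono mult_left_mono) auto
  finally show ?thesis unfolding Bs_def by simp
qed


lemma PiE_avg:
  fixes g :: "('i \<Rightarrow> 'b) \<Rightarrow> real"
  assumes fI: "finite I" and fF: "\<And>i. i \<in> I \<Longrightarrow> finite (F i)" and k: "k \<in> I"
  shows "(\<Sum>\<beta>\<in>PiE I F. g \<beta>) = (\<Sum>\<beta>\<in>PiE I F. (\<Sum>B\<in>F k. g (\<beta>(k := B))) / real (card (F k)))"
proof (cases "F k = {}")
  case True
  then have "PiE I F = {}" using k by (auto simp: PiE_eq_empty_iff)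
  then show ?thesis by simp
next
  case False
  define I' where "I' = I - {k}"
  have II: "I = insert k I'" and kI': "k \<notin> I'" unfolding I'_def using k by auto
  define c where "c = real (card (F k))"
  have c0: "c > 0" unfolding c_def using False fF[OF k] by (simp add: card_gt_0_iff)
  have fk: "finite (F k)" using fF k by simp
  have fP: "finite (PiE I' F)" using fI fF unfolding I'_def by (intro finite_PiE) auto
  have re: "(\<Sum>\<beta>\<in>PiE I F. G \<beta>) = (\<Sum>y\<in>F k. \<Sum>h\<in>PiE I' F. G (h(k := y)))" for G :: "('i \<Rightarrow> 'b) \<Rightarrow> real"
  proof -
    have "(\<Sum>\<beta>\<in>PiE I F. G \<beta>) = (\<Sum>\<beta>\<in>(\<lambda>(y, h). h(k := y)) ` (F k \<times> PiE I' F). G \<beta>)"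
      unfolding II PiE_insert_eq ..
    also have "\<dots> = (\<Sum>p\<in>F k \<times> PiE I' F. G ((\<lambda>(y, h). h(k := y)) p))"
      by (rule sum.reindex[unfolded comp_def]) (rule inj_combinator[OF kI'])
    also have "\<dots> = (\<Sum>p\<in>F k \<times> PiE I' F. (\<lambda>y h. G (h(k := y))) (fst p) (snd p))"
      by (intro sum.cong refl) (auto simp: split_beta)
    also have "\<dots> = (\<Sum>y\<in>F k. \<Sum>h\<in>PiE I' F. G (h(k := y)))"
      by (simp add: sum.cartesian_product')
    finally show ?thesis .
  qed
  have "(\<Sum>\<beta>\<in>PiE I F. (\<Sum>B\<in>F k. g (\<beta>(k := B))) / c)
      = (\<Sum>y\<in>F k. \<Sum>h\<in>PiE I' F. (\<Sum>B\<in>F k. g (h(k := B))) / c)"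
    unfolding re by simp
  also have "\<dots> = c * (\<Sum>h\<in>PiE I' F. (\<Sum>B\<in>F k. g (h(k := B))) / c)"
    by (simp add: c_def)
  also have "\<dots> = (\<Sum>h\<in>PiE I' F. \<Sum>B\<in>F k. g (h(k := B)))"
    using c0 by (simp add: sum_divide_distrib[symmetric])
  also have "\<dots> = (\<Sum>B\<in>F k. \<Sum>h\<in>PiE I' F. g (h(k := B)))" by (rule sum.swap)
  also have "\<dots> = (\<Sum>\<beta>\<in>PiE I F. g \<beta>)" unfolding re ..
  finally show ?thesis unfolding c_def by simp
qed


lemma pair_pmf_of_set:
  assumes "finite A" "A \<noteq> {}" "finite B" "B \<noteq> {}"
  shows "pair_pmf (pmf_of_set A) (pmf_of_set B) = pmf_of_set (A \<times> B)"
proof (rule pmf_eqI)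
  fix x :: "'a \<times> 'b"
  obtain a b where x: "x = (a, b)" by force
  have "A \<times> B \<noteq> {}" "finite (A \<times> B)" using assms by auto
  then show "pmf (pair_pmf (pmf_of_set A) (pmf_of_set B)) x = pmf (pmf_of_set (A \<times> B)) x"
    using assms unfolding x by (simp add: pmf_pair indicator_def card_cartesian_product)
qed

lemma expectation_pair_uniform:
  fixes h :: "'a \<times> 'b \<Rightarrow> real"
  assumes "finite A" "A \<noteq> {}" "finite B" "B \<noteq> {}"
  shows "measure_pmf.expectation (pair_pmf (pmf_of_set A) (pmf_of_set B)) h
       = (1 / real (card B)) * (\<Sum>y\<in>B. measure_pmf.expectation (pmf_of_set A) (\<lambda>x. h (x, y)))"
proof -
  have ne: "A \<times> B \<noteq> {}" "finite (A \<times> B)" using assms by auto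
  have "measure_pmf.expectation (pair_pmf (pmf_of_set A) (pmf_of_set B)) h = (\<Sum>p\<in>A \<times> B. h p) / real (card (A \<times> B))"
    unfolding pair_pmf_of_set[OF assms] by (rule integral_pmf_of_set[OF ne])
  also have "(\<Sum>p\<in>A \<times> B. h p) = (\<Sum>x\<in>A. \<Sum>y\<in>B. h (x, y))" by (simp add: sum.cartesian_product)
  also have "\<dots> = (\<Sum>y\<in>B. \<Sum>x\<in>A. h (x, y))" by (rule sum.swap)
  finally show ?thesis using assms
    by (simp add: integral_pmf_of_set card_cartesian_product sum_divide_distrib field_simps)
qed




lemma inner_local:
  "(\<And>j. 1 \<le> j \<Longrightarrow> j \<le> t \<Longrightarrow> B j = B' j) \<Longrightarrow>
   sarah_inner D psi n gf b eta gam B w t = sarah_inner D psi n gf b eta gam B' w t"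
proof (induction t)
  case 0 then show ?case by simp
next
  case (Suc t)
  then have IH: "sarah_inner D psi n gf b eta gam B w t = sarah_inner D psi n gf b eta gam B' w t" by simp
  have "B (Suc t) = B' (Suc t)" using Suc.prems by simp
  then show ?case using IH by (simp add: split_def Let_def)
qed

lemma inner_local_fst:
  "(\<And>j. 1 \<le> j \<Longrightarrow> j \<le> t \<Longrightarrow> B j = B' j) \<Longrightarrow>
   fst (sarah_inner D psi n gf b eta gam B w (Suc t)) = fst (sarah_inner D psi n gf b eta gam B' w (Suc t))"
  using inner_local[of t B B' D psi n gf b eta gam w] by (simp add: split_def Let_def)

lemma snap_local:
  "(\<And>s' j. 1 \<le> s' \<Longrightarrow> s' \<le> s \<Longrightarrow> 1 \<le> j \<Longrightarrow> j \<le> m \<Longrightarrow> beta (s', j) = beta' (s', j)) \<Longrightarrow>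
   sarah_snap D psi n gf b eta gam m beta w0 s = sarah_snap D psi n gf b eta gam m beta' w0 s"
proof (induction s)
  case 0 then show ?case by simp
next
  case (Suc s)
  then have IH: "sarah_snap D psi n gf b eta gam m beta w0 s = sarah_snap D psi n gf b eta gam m beta' w0 s" by simp
  show ?case using inner_local_fst[of m "\<lambda>t. beta (Suc s, t)" "\<lambda>t. beta' (Suc s, t)"] Suc.prems IH by simp
qed

lemma inner_Suc:
  "sarah_inner D psi n gf b eta gam B w (Suc t) =
    ((1 - gam t) *\<^sub>R fst (sarah_inner D psi n gf b eta gam B w t) + gam t *\<^sub>R prox D psi (eta t) (fst (sarah_inner D psi n gf b eta gam B w t) - eta t *\<^sub>R snd (sarah_inner D psi n gf b eta gam B w t)),
     snd (sarah_inner D psi n gf b eta gam B w t) + (1 / real b) *\<^sub>R (\<Sum>i\<in>B (Suc t). gf i ((1 - gam t) *\<^sub>R fst (sarah_inner D psi n gf b eta gam B w t) + gam t *\<^sub>R prox D psi (eta t) (fst (sarah_inner D psi n gf b eta gam B w t) - eta t *\<^sub>R snd (sarah_inner D psi n gf b eta gam B w t))) - gf i (fst (sarah_inner D psi n gf b eta gam B w t))))"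
  by (simp add: split_def Let_def)

lemma seq_bound:
  fixes A Q G F :: "nat \<Rightarrow> real" and gam eta K :: real and m :: nat
  assumes A0: "\<And>t. A t \<ge> 0" and Qn: "\<And>t. Q t \<ge> 0" and Q0: "Q 0 = 0"
    and Qs: "\<And>t. t < m \<Longrightarrow> Q (Suc t) \<le> Q t + K * A t"
    and Fs: "\<And>t. F (Suc t) \<le> F t + gam / 2 * Q t - gam * (3 / 2) * A t"
    and Gs: "\<And>t. eta\<^sup>2 * G t \<le> 2 * A t + 2 * eta\<^sup>2 * Q t"
    and g0: "gam > 0" and K0: "K \<ge> 0" and Km: "K * real m \<le> 2 / 3" and e2: "eta\<^sup>2 \<le> 1 / 4"
  shows "gam * eta\<^sup>2 / 2 * (\<Sum>t<Suc m. G t) \<le> F 0 - F (Suc m)"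
proof -
  define AS where "AS = (\<Sum>t<Suc m. A t)"
  define QS where "QS = (\<Sum>t<Suc m. Q t)"
  define GS where "GS = (\<Sum>t<Suc m. G t)"
  have Qb: "t \<le> m \<Longrightarrow> Q t \<le> K * (\<Sum>j<t. A j)" for t
  proof (induction t)
    case 0 then show ?case using Q0 by simp
  next
    case (Suc t)
    then have "Q (Suc t) \<le> Q t + K * A t" using Qs by simp
    also have "\<dots> \<le> K * (\<Sum>j<t. A j) + K * A t" using Suc by simp
    finally show ?case by (simp add: algebra_simps)
  qed
  have AS0: "AS \<ge> 0" unfolding AS_def using A0 by (simp add: sum_nonneg)
  have QS0: "QS \<ge> 0" unfolding QS_def using Qn by (simp add: sum_nonneg)
  have "QS = Q 0 + (\<Sum>t<m. Q (Suc t))" unfolding QS_def by (rule sum.lessThan_Suc_shift)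
  also have "\<dots> \<le> 0 + (\<Sum>t<m. K * AS)"
  proof -
    have "Q (Suc t) \<le> K * AS" if "t < m" for t
    proof -
      have "Q (Suc t) \<le> K * (\<Sum>j<Suc t. A j)" using Qb[of "Suc t"] that by simp
      also have "(\<Sum>j<Suc t. A j) \<le> AS" unfolding AS_def using that A0
        by (intro sum_mono2) auto
      finally show ?thesis using K0 by (meson dual_order.trans mult_left_mono \<open>(\<Sum>j<Suc t. A j) \<le> AS\<close> \<open>Q (Suc t) \<le> K * (\<Sum>j<Suc t. A j)\<close>)
    qed
    then show ?thesis using Q0 by (intro add_mono sum_mono) auto
  qed
  also have "\<dots> = (K * real m) * AS" by simp
  also have "\<dots> \<le> 2 / 3 * AS" using Km AS0 by (intro mult_right_mono) auto
  finally have QSb: "QS \<le> 2 / 3 * AS" .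
  have "F (Suc m) - F 0 = (\<Sum>t<Suc m. F (Suc t) - F t)" by (rule sum_lessThan_telescope[symmetric])
  also have "\<dots> \<le> (\<Sum>t<Suc m. gam / 2 * Q t - gam * (3 / 2) * A t)"
  proof (rule sum_mono)
    fix t show "F (Suc t) - F t \<le> gam / 2 * Q t - gam * (3 / 2) * A t" using Fs[of t] by linarith
  qed
  also have "\<dots> = gam / 2 * QS - gam * (3 / 2) * AS"
    unfolding QS_def AS_def sum_subtractf sum_distrib_left[symmetric] by simp
  finally have Ftel: "F 0 - F (Suc m) \<ge> gam * (3 / 2) * AS - gam / 2 * QS" by simp
  have "eta\<^sup>2 * GS \<le> (\<Sum>t<Suc m. 2 * A t + 2 * eta\<^sup>2 * Q t)"
    unfolding GS_def sum_distrib_left using Gs by (intro sum_mono) auto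
  also have "\<dots> = 2 * AS + 2 * eta\<^sup>2 * QS"
    unfolding AS_def QS_def sum.distrib sum_distrib_left[symmetric] ..
  finally have GSb: "eta\<^sup>2 * GS \<le> 2 * AS + 2 * eta\<^sup>2 * QS" .
  have "(eta\<^sup>2 + 1 / 2) * QS \<le> 3 / 4 * QS" using e2 QS0 by (intro mult_right_mono) auto
  also have "\<dots> \<le> 3 / 4 * (2 / 3 * AS)" using QSb by simp
  finally have key: "(eta\<^sup>2 + 1 / 2) * QS \<le> AS / 2" by simp
  have "gam * eta\<^sup>2 / 2 * GS = gam / 2 * (eta\<^sup>2 * GS)" by simp
  also have "\<dots> \<le> gam / 2 * (2 * AS + 2 * eta\<^sup>2 * QS)" using GSb g0 by (intro mult_left_mono) auto
  also have "\<dots> = gam * (AS + (eta\<^sup>2 + 1 / 2) * QS) - gam / 2 * QS" by (simp add: algebra_simps)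
  also have "\<dots> \<le> gam * (AS + AS / 2) - gam / 2 * QS" using key g0 by (simp add: mult_left_mono)
  also have "\<dots> = gam * (3 / 2) * AS - gam / 2 * QS" by (simp add: algebra_simps)
  also have "\<dots> \<le> F 0 - F (Suc m)" using Ftel by simp
  finally show ?thesis unfolding GS_def .
qed

locale psx =
  fixes f :: "nat \<Rightarrow> 'a::euclidean_space \<Rightarrow> real" and gf :: "nat \<Rightarrow> 'a \<Rightarrow> 'a"
    and psi :: "'a \<Rightarrow> real" and D :: "'a set"
    and n b S m :: nat and L gam eta :: real and w0 :: 'a
  assumes n2: "n \<ge> 2"
    and grad: "\<forall>i<n. \<forall>x. (f i has_derivative (\<lambda>h. gf i x \<bullet> h)) (at x)"
    and dom_ne: "D \<noteq> {}" and psi_cvx: "convex_on D psi"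
    and psi_closed: "closed {(x, t). x \<in> D \<and> psi x \<le> t}"
    and A2: "\<forall>w w'. (\<Sum>i<n. (norm (gf i w - gf i w'))\<^sup>2) / real n \<le> L\<^sup>2 * (norm (w - w'))\<^sup>2"
    and Lpos: "L > 0" and b1: "1 \<le> b" and bn: "b < n" and m1: "m \<ge> 1"
    and g0: "0 < gam" and g1: "gam \<le> 1" and e0: "0 < eta"
    and key1: "1 / eta - L * gam / 2 = 2"
    and key2: "(real n - real b) / (real b * (real n - 1)) * L\<^sup>2 * gam\<^sup>2 * real m \<le> 2 / 3"
    and key3: "eta\<^sup>2 \<le> 1 / 4" and w0D: "w0 \<in> D"
begin

definition "fb w = (\<Sum>i<n. f i w) / real n"
definition "FF w = fb w + psi w"
definition "gr = fullgrad n gf"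
definition "P u = prox D psi eta u"
definition "Bs = {B. B \<subseteq> {..<n} \<and> card B = b}"
definition "Om = ({1..S} \<times> {1..m}) \<rightarrow>\<^sub>E Bs"
definition "snap beta s = sarah_snap D psi n gf b (\<lambda>_. eta) (\<lambda>_. gam) m beta w0 s"
definition "inn beta s t = sarah_inner D psi n gf b (\<lambda>_. eta) (\<lambda>_. gam) (\<lambda>t. beta (s, t)) (snap beta (s - 1)) t"
definition "wt beta s t = fst (inn beta s t)"
definition "vt beta s t = snd (inn beta s t)"
definition "dd beta s t = P (wt beta s t - eta *\<^sub>R vt beta s t) - wt beta s t"
definition "ee beta s t = vt beta s t - gr (wt beta s t)"
definition "rho = (real n - real b) / (real b * (real n - 1))"

lemma P_props: "P u \<in> D" "\<And>y. y \<in> D \<Longrightarrow> (u - P u) \<bullet> (y - P u) \<le> eta * (psi y - psi (P u))"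
  using prox_char[OF psi_closed psi_cvx dom_ne e0, of u] unfolding P_def by auto

lemma cvxD: "convex D" using psi_cvx unfolding convex_on_def by auto

lemma comb_in_D: "w \<in> D \<Longrightarrow> (1 - gam) *\<^sub>R w + gam *\<^sub>R P u \<in> D"
  using cvxD P_props(1) g0 g1 unfolding convex_def by auto

lemma inner_in_D: "w \<in> D \<Longrightarrow> fst (sarah_inner D psi n gf b (\<lambda>_. eta) (\<lambda>_. gam) B w t) \<in> D"
proof (induction t)
  case 0 then show ?case by simp
next
  case (Suc t) then show ?case using comb_in_D unfolding P_def inner_Suc by simp
qed

lemma snap_in_D: "snap beta s \<in> D"
proof (induction s)
  case 0 then show ?case using w0D unfolding snap_def by simp
next
  case (Suc s) then show ?case unfolding snap_def sarah_snap.simps by (intro inner_in_D)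
qed

lemma wt_in_D: "wt beta s t \<in> D"
  unfolding wt_def inn_def using inner_in_D snap_in_D unfolding snap_def by blast

lemma snap_Suc: "snap beta (Suc s) = wt beta (Suc s) (Suc m)"
  unfolding snap_def wt_def inn_def by simp

lemma wt0: "wt beta s 0 = snap beta (s - 1)" unfolding wt_def inn_def by simp

lemma ee0: "ee beta s 0 = 0" unfolding ee_def vt_def wt_def inn_def gr_def by simp

lemma wt_Suc: "wt beta s (Suc t) = wt beta s t + gam *\<^sub>R dd beta s t"
  unfolding wt_def dd_def vt_def P_def inn_def inner_Suc by (simp add: algebra_simps)

lemma vt_Suc: "vt beta s (Suc t) = vt beta s t + (1 / real b) *\<^sub>R (\<Sum>i\<in>beta (s, Suc t). gf i (wt beta s (Suc t)) - gf i (wt beta s t))"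
  unfolding vt_def wt_def inn_def inner_Suc by simp

lemma finite_Om: "finite Om" unfolding Om_def Bs_def using finite_Bs by (intro finite_PiE) auto

lemma Bs_ne: "Bs \<noteq> {}"
proof -
  have "card {B. B \<subseteq> {..<n} \<and> card B = b} = n choose b" using n_subsets[of "{..<n}" b] by simp
  moreover have "n choose b > 0" using bn by simp
  ultimately show ?thesis unfolding Bs_def by (metis card.empty less_irrefl)
qed

lemma Om_ne: "Om \<noteq> {}" unfolding Om_def using Bs_ne by (simp add: PiE_eq_empty_iff)

lemma fb_deriv: "(fb has_derivative (\<lambda>h. gr x \<bullet> h)) (at x)"
proof -
  have "fb = (\<lambda>w. (\<Sum>i<n. f i w) / real n)" unfolding fb_def by auto
  then show ?thesis unfolding gr_def using fbar_deriv[OF grad] by simp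
qed

lemma gr_lip: "norm (gr x - gr y) \<le> L * norm (x - y)"
  unfolding gr_def by (rule fullgrad_lip) (use n2 A2 Lpos in auto)

lemma fb_descent: "fb y \<le> fb x + gr x \<bullet> (y - x) + L / 2 * (norm (y - x))\<^sup>2"
  by (rule descent_lemma[OF fb_deriv gr_lip])

lemma step:
  assumes wD: "w \<in> D"
  shows "FF (w + gam *\<^sub>R (P (w - eta *\<^sub>R v) - w)) \<le> FF w + gam / 2 * (norm (v - gr w))\<^sup>2
            - gam * (1 / eta - L * gam / 2 - 1 / 2) * (norm (P (w - eta *\<^sub>R v) - w))\<^sup>2"
    and "eta\<^sup>2 * (norm (grad_map D psi n gf eta w))\<^sup>2 \<le> 2 * (norm (P (w - eta *\<^sub>R v) - w))\<^sup>2 + 2 * eta\<^sup>2 * (norm (v - gr w))\<^sup>2"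
    and "(\<Sum>i<n. (norm (gf i (w + gam *\<^sub>R (P (w - eta *\<^sub>R v) - w)) - gf i w))\<^sup>2) / real n
            \<le> L\<^sup>2 * gam\<^sup>2 * (norm (P (w - eta *\<^sub>R v) - w))\<^sup>2"
proof -
  define p where "p = P (w - eta *\<^sub>R v)"
  define d where "d = p - w"
  define e where "e = v - gr w"
  define w' where "w' = w + gam *\<^sub>R d"
  have pD: "p \<in> D" unfolding p_def by (rule P_props(1))
  have w'eq: "w' = (1 - gam) *\<^sub>R w + gam *\<^sub>R p" unfolding w'_def d_def by (simp add: algebra_simps)
  have desc: "fb w' \<le> fb w + gam * (gr w \<bullet> d) + L / 2 * gam\<^sup>2 * (norm d)\<^sup>2"
    using fb_descent[of w' w] g0 unfolding w'_def by (simp add: power_mult_distrib)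
  have psiw': "psi w' \<le> (1 - gam) * psi w + gam * psi p"
    unfolding w'eq using convex_onD[OF psi_cvx, of gam w p] g0 g1 wD pD by simp
  have VI: "(w - eta *\<^sub>R v - p) \<bullet> (w - p) \<le> eta * (psi w - psi p)"
    unfolding p_def by (rule P_props(2)[OF wD])
  have "(w - eta *\<^sub>R v - p) \<bullet> (w - p) = (norm d)\<^sup>2 + eta * (v \<bullet> d)"
    unfolding d_def by (simp add: power2_norm_eq_inner inner_diff_left inner_diff_right inner_commute algebra_simps)
  with VI have psip: "eta * psi p \<le> eta * psi w - (norm d)\<^sup>2 - eta * (v \<bullet> d)" by (simp add: algebra_simps)
  then have psip': "psi p \<le> psi w - (norm d)\<^sup>2 / eta - v \<bullet> d" using e0 by (simp add: field_simps)
  have ed: "- (e \<bullet> d) \<le> ((norm e)\<^sup>2 + (norm d)\<^sup>2) / 2"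
  proof -
    have "0 \<le> (norm (e + d))\<^sup>2" by simp
    also have "\<dots> = (norm e)\<^sup>2 + 2 * (e \<bullet> d) + (norm d)\<^sup>2"
      by (simp add: power2_norm_eq_inner inner_add_left inner_add_right inner_commute)
    finally show ?thesis by simp
  qed
  have "FF w' = fb w' + psi w'" unfolding FF_def ..
  also have "\<dots> \<le> fb w + gam * (gr w \<bullet> d) + L / 2 * gam\<^sup>2 * (norm d)\<^sup>2 + ((1 - gam) * psi w + gam * psi p)"
    using desc psiw' by linarith
  also have "\<dots> \<le> fb w + gam * (gr w \<bullet> d) + L / 2 * gam\<^sup>2 * (norm d)\<^sup>2 + ((1 - gam) * psi w + gam * (psi w - (norm d)\<^sup>2 / eta - v \<bullet> d))"
    using psip' g0 by (simp add: mult_left_mono)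
  also have "\<dots> = FF w - gam * (e \<bullet> d) - gam * (1 / eta - L * gam / 2) * (norm d)\<^sup>2"
    unfolding FF_def e_def by (simp add: inner_diff_left algebra_simps power2_eq_square)
  also have "\<dots> \<le> FF w + gam * (((norm e)\<^sup>2 + (norm d)\<^sup>2) / 2) - gam * (1 / eta - L * gam / 2) * (norm d)\<^sup>2"
  proof -
    have "gam * (- (e \<bullet> d)) \<le> gam * (((norm e)\<^sup>2 + (norm d)\<^sup>2) / 2)"
      by (rule mult_left_mono[OF ed]) (use g0 in simp)
    then show ?thesis by simp
  qed
  also have "\<dots> = FF w + gam / 2 * (norm e)\<^sup>2 - gam * (1 / eta - L * gam / 2 - 1 / 2) * (norm d)\<^sup>2"
    by (simp add: algebra_simps)
  finally show "FF (w + gam *\<^sub>R (P (w - eta *\<^sub>R v) - w)) \<le> FF w + gam / 2 * (norm (v - gr w))\<^sup>2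
            - gam * (1 / eta - L * gam / 2 - 1 / 2) * (norm (P (w - eta *\<^sub>R v) - w))\<^sup>2"
    unfolding w'_def d_def e_def p_def .
next
  define p where "p = P (w - eta *\<^sub>R v)"
  define p' where "p' = P (w - eta *\<^sub>R gr w)"
  have pD: "p \<in> D" "p' \<in> D" unfolding p_def p'_def by (rule P_props(1))+
  have "norm (p - p') \<le> norm ((w - eta *\<^sub>R v) - (w - eta *\<^sub>R gr w))"
    by (rule VI_nonexp[of _ _ _ eta psi]) (use P_props(2) pD in \<open>auto simp: p_def p'_def\<close>)
  also have "\<dots> = eta * norm (v - gr w)"
  proof -
    have "(w - eta *\<^sub>R v) - (w - eta *\<^sub>R gr w) = - (eta *\<^sub>R (v - gr w))" by (simp add: algebra_simps)
    then show ?thesis using e0 by (simp only: norm_minus_cancel norm_scaleR)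
  qed
  finally have pp: "norm (p - p') \<le> eta * norm (v - gr w)" .
  have G: "eta *\<^sub>R grad_map D psi n gf eta w = w - p'"
    unfolding grad_map_def p'_def P_def gr_def using e0 by simp
  have "norm (w - p') \<le> norm (p - w) + norm (p - p')"
    using norm_triangle_ineq[of "w - p" "p - p'"] by (simp add: norm_minus_commute)
  then have nw: "norm (w - p') \<le> norm (p - w) + eta * norm (v - gr w)" using pp by linarith
  have "eta\<^sup>2 * (norm (grad_map D psi n gf eta w))\<^sup>2 = (norm (w - p'))\<^sup>2"
    using G e0 by (metis abs_of_pos norm_scaleR power_mult_distrib)
  also have "\<dots> \<le> (norm (p - w) + eta * norm (v - gr w))\<^sup>2"
    using nw by (intro power_mono) auto
  also have "\<dots> \<le> 2 * (norm (p - w))\<^sup>2 + 2 * eta\<^sup>2 * (norm (v - gr w))\<^sup>2"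
  proof -
    have h: "2 * (norm (p - w))\<^sup>2 + 2 * eta\<^sup>2 * (norm (v - gr w))\<^sup>2 - (norm (p - w) + eta * norm (v - gr w))\<^sup>2
        = (norm (p - w) - eta * norm (v - gr w))\<^sup>2" by (simp add: power2_eq_square algebra_simps)
    have "0 \<le> (norm (p - w) - eta * norm (v - gr w))\<^sup>2" by simp
    with h show ?thesis by linarith
  qed
  finally show "eta\<^sup>2 * (norm (grad_map D psi n gf eta w))\<^sup>2 \<le> 2 * (norm (P (w - eta *\<^sub>R v) - w))\<^sup>2 + 2 * eta\<^sup>2 * (norm (v - gr w))\<^sup>2"
    unfolding p_def .
next
  show "(\<Sum>i<n. (norm (gf i (w + gam *\<^sub>R (P (w - eta *\<^sub>R v) - w)) - gf i w))\<^sup>2) / real n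
            \<le> L\<^sup>2 * gam\<^sup>2 * (norm (P (w - eta *\<^sub>R v) - w))\<^sup>2"
  proof -
    let ?w' = "w + gam *\<^sub>R (P (w - eta *\<^sub>R v) - w)"
    have "(\<Sum>i<n. (norm (gf i ?w' - gf i w))\<^sup>2) / real n \<le> L\<^sup>2 * (norm (?w' - w))\<^sup>2"
      using A2 by blast
    also have "(norm (?w' - w))\<^sup>2 = gam\<^sup>2 * (norm (P (w - eta *\<^sub>R v) - w))\<^sup>2"
      using g0 by (simp add: power_mult_distrib)
    finally show ?thesis by (simp add: mult.assoc)
  qed
qed

lemma inn_upd:
  assumes s1: "1 \<le> s"
  shows "inn (beta((s, Suc t) := B)) s t = inn beta s t"
proof -
  have sn: "snap (beta((s, Suc t) := B)) (s - 1) = snap beta (s - 1)"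
    unfolding snap_def by (rule snap_local) (use s1 in auto)
  show ?thesis unfolding inn_def sn by (rule inner_local) auto
qed

lemma wt_upd: "1 \<le> s \<Longrightarrow> wt (beta((s, Suc t) := B)) s t = wt beta s t"
  unfolding wt_def using inn_upd by simp

lemma vt_upd: "1 \<le> s \<Longrightarrow> vt (beta((s, Suc t) := B)) s t = vt beta s t"
  unfolding vt_def using inn_upd by simp

lemma wt_upd_Suc: "1 \<le> s \<Longrightarrow> wt (beta((s, Suc t) := B)) s (Suc t) = wt beta s (Suc t)"
  unfolding wt_Suc dd_def using wt_upd vt_upd by simp

lemma gr_diff: "gr x - gr y = (1 / real n) *\<^sub>R (\<Sum>i<n. gf i x - gf i y)"
  unfolding gr_def fullgrad_def by (simp add: sum_subtractf scaleR_diff_right)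

lemma ee_upd:
  assumes s1: "1 \<le> s"
  shows "ee (beta((s, Suc t) := B)) s (Suc t) = ee beta s t
     + (1 / real b) *\<^sub>R (\<Sum>i\<in>B. gf i (wt beta s (Suc t)) - gf i (wt beta s t))
     - (1 / real n) *\<^sub>R (\<Sum>i<n. gf i (wt beta s (Suc t)) - gf i (wt beta s t))"
proof -
  let ?b = "beta((s, Suc t) := B)"
  have "ee ?b s (Suc t) = vt beta s t + (1 / real b) *\<^sub>R (\<Sum>i\<in>B. gf i (wt beta s (Suc t)) - gf i (wt beta s t))
      - gr (wt beta s (Suc t))"
    unfolding ee_def vt_Suc using wt_upd[OF s1] vt_upd[OF s1] wt_upd_Suc[OF s1] by simp
  also have "gr (wt beta s (Suc t)) = gr (wt beta s t) + (1 / real n) *\<^sub>R (\<Sum>i<n. gf i (wt beta s (Suc t)) - gf i (wt beta s t))"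
    using gr_diff[of "wt beta s (Suc t)" "wt beta s t"] by (simp add: algebra_simps)
  finally show ?thesis unfolding ee_def by (simp add: algebra_simps)
qed

lemma rho_nonneg: "rho \<ge> 0" unfolding rho_def using bn b1 n2 by simp

lemma ee_exp:
  assumes s: "s \<in> {1..S}" and t: "t < m"
  shows "(\<Sum>beta\<in>Om. (norm (ee beta s (Suc t)))\<^sup>2)
      \<le> (\<Sum>beta\<in>Om. (norm (ee beta s t))\<^sup>2 + rho * L\<^sup>2 * gam\<^sup>2 * (norm (dd beta s t))\<^sup>2)"
proof -
  have kI: "(s, Suc t) \<in> {1..S} \<times> {1..m}" using s t by auto
  have "(\<Sum>beta\<in>Om. (norm (ee beta s (Suc t)))\<^sup>2)
      = (\<Sum>beta\<in>Om. (\<Sum>B\<in>Bs. (norm (ee (beta((s, Suc t) := B)) s (Suc t)))\<^sup>2) / real (card Bs))"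
    unfolding Om_def by (rule PiE_avg[OF _ _ kI]) (auto simp: Bs_def finite_Bs)
  also have "\<dots> \<le> (\<Sum>beta\<in>Om. (norm (ee beta s t))\<^sup>2 + rho * L\<^sup>2 * gam\<^sup>2 * (norm (dd beta s t))\<^sup>2)"
  proof (rule sum_mono)
    fix beta assume "beta \<in> Om"
    define Dl where "Dl i = gf i (wt beta s (Suc t)) - gf i (wt beta s t)" for i
    have s1: "1 \<le> s" using s by simp
    have "(\<Sum>B\<in>Bs. (norm (ee (beta((s, Suc t) := B)) s (Suc t)))\<^sup>2) / real (card Bs)
       = (\<Sum>B\<in>Bs. (norm (ee beta s t + (1 / real b) *\<^sub>R (\<Sum>i\<in>B. Dl i) - (1 / real n) *\<^sub>R (\<Sum>i<n. Dl i)))\<^sup>2) / real (card Bs)"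
      unfolding ee_upd[OF s1] Dl_def ..
    also have "\<dots> \<le> (norm (ee beta s t))\<^sup>2 + rho * ((\<Sum>i<n. (norm (Dl i))\<^sup>2) / real n)"
      unfolding Bs_def rho_def by (rule sample_var) (use n2 b1 bn in auto)
    also have "(\<Sum>i<n. (norm (Dl i))\<^sup>2) / real n \<le> L\<^sup>2 * gam\<^sup>2 * (norm (dd beta s t))\<^sup>2"
      unfolding Dl_def wt_Suc dd_def using step(3)[OF wt_in_D, of beta s t "vt beta s t"] by simp
    finally show "(\<Sum>B\<in>Bs. (norm (ee (beta((s, Suc t) := B)) s (Suc t)))\<^sup>2) / real (card Bs)
        \<le> (norm (ee beta s t))\<^sup>2 + rho * L\<^sup>2 * gam\<^sup>2 * (norm (dd beta s t))\<^sup>2"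
      using rho_nonneg by (simp add: mult_left_mono mult.assoc)
  qed
  finally show ?thesis .
qed

lemma epoch_bound:
  assumes s: "s \<in> {1..S}"
  shows "gam * eta\<^sup>2 / 2 * (\<Sum>t<Suc m. \<Sum>beta\<in>Om. (norm (grad_map D psi n gf eta (wt beta s t)))\<^sup>2)
     \<le> (\<Sum>beta\<in>Om. FF (snap beta (s - 1))) - (\<Sum>beta\<in>Om. FF (snap beta s))"
proof -
  define K where "K = rho * L\<^sup>2 * gam\<^sup>2"
  have c32: "1 / eta - L * gam / 2 - 1 / 2 = 3 / 2" using key1 by simp
  have "gam * eta\<^sup>2 / 2 * (\<Sum>t<Suc m. \<Sum>beta\<in>Om. (norm (grad_map D psi n gf eta (wt beta s t)))\<^sup>2)
     \<le> (\<lambda>t. \<Sum>beta\<in>Om. FF (wt beta s t)) 0 - (\<lambda>t. \<Sum>beta\<in>Om. FF (wt beta s t)) (Suc m)"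
  proof (rule seq_bound[where A = "\<lambda>t. \<Sum>beta\<in>Om. (norm (dd beta s t))\<^sup>2"
        and Q = "\<lambda>t. \<Sum>beta\<in>Om. (norm (ee beta s t))\<^sup>2" and K = K])
    show "\<And>t. 0 \<le> (\<Sum>beta\<in>Om. (norm (dd beta s t))\<^sup>2)" by (simp add: sum_nonneg)
    show "\<And>t. 0 \<le> (\<Sum>beta\<in>Om. (norm (ee beta s t))\<^sup>2)" by (simp add: sum_nonneg)
    show "(\<Sum>beta\<in>Om. (norm (ee beta s 0))\<^sup>2) = 0" by (simp add: ee0)
    show "\<And>t. t < m \<Longrightarrow> (\<Sum>beta\<in>Om. (norm (ee beta s (Suc t)))\<^sup>2)
        \<le> (\<Sum>beta\<in>Om. (norm (ee beta s t))\<^sup>2) + K * (\<Sum>beta\<in>Om. (norm (dd beta s t))\<^sup>2)"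
      using ee_exp[OF s] unfolding K_def by (simp add: sum.distrib sum_distrib_left mult.assoc)
    show "\<And>t. (\<Sum>beta\<in>Om. FF (wt beta s (Suc t))) \<le> (\<Sum>beta\<in>Om. FF (wt beta s t))
        + gam / 2 * (\<Sum>beta\<in>Om. (norm (ee beta s t))\<^sup>2) - gam * (3 / 2) * (\<Sum>beta\<in>Om. (norm (dd beta s t))\<^sup>2)"
    proof -
      fix t
      have "(\<Sum>beta\<in>Om. FF (wt beta s (Suc t))) \<le> (\<Sum>beta\<in>Om. FF (wt beta s t)
          + gam / 2 * (norm (ee beta s t))\<^sup>2 - gam * (3 / 2) * (norm (dd beta s t))\<^sup>2)"
      proof (rule sum_mono)
        fix beta
        show "FF (wt beta s (Suc t)) \<le> FF (wt beta s t) + gam / 2 * (norm (ee beta s t))\<^sup>2 - gam * (3 / 2) * (norm (dd beta s t))\<^sup>2"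
          using step(1)[OF wt_in_D, of beta s t "vt beta s t"] c32 unfolding wt_Suc dd_def ee_def by simp
      qed
      then show "(\<Sum>beta\<in>Om. FF (wt beta s (Suc t))) \<le> (\<Sum>beta\<in>Om. FF (wt beta s t))
        + gam / 2 * (\<Sum>beta\<in>Om. (norm (ee beta s t))\<^sup>2) - gam * (3 / 2) * (\<Sum>beta\<in>Om. (norm (dd beta s t))\<^sup>2)"
        by (simp add: sum.distrib sum_subtractf sum_distrib_left)
    qed
    show "\<And>t. eta\<^sup>2 * (\<Sum>beta\<in>Om. (norm (grad_map D psi n gf eta (wt beta s t)))\<^sup>2)
        \<le> 2 * (\<Sum>beta\<in>Om. (norm (dd beta s t))\<^sup>2) + 2 * eta\<^sup>2 * (\<Sum>beta\<in>Om. (norm (ee beta s t))\<^sup>2)"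
    proof -
      fix t
      have "eta\<^sup>2 * (\<Sum>beta\<in>Om. (norm (grad_map D psi n gf eta (wt beta s t)))\<^sup>2)
          = (\<Sum>beta\<in>Om. eta\<^sup>2 * (norm (grad_map D psi n gf eta (wt beta s t)))\<^sup>2)" by (simp add: sum_distrib_left)
      also have "\<dots> \<le> (\<Sum>beta\<in>Om. 2 * (norm (dd beta s t))\<^sup>2 + 2 * eta\<^sup>2 * (norm (ee beta s t))\<^sup>2)"
      proof (rule sum_mono)
        fix beta show "eta\<^sup>2 * (norm (grad_map D psi n gf eta (wt beta s t)))\<^sup>2 \<le> 2 * (norm (dd beta s t))\<^sup>2 + 2 * eta\<^sup>2 * (norm (ee beta s t))\<^sup>2"
          using step(2)[OF wt_in_D, of beta s t "vt beta s t"] unfolding dd_def ee_def by simp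
      qed
      also have "\<dots> = 2 * (\<Sum>beta\<in>Om. (norm (dd beta s t))\<^sup>2) + 2 * eta\<^sup>2 * (\<Sum>beta\<in>Om. (norm (ee beta s t))\<^sup>2)"
        by (simp add: sum.distrib sum_distrib_left)
      finally show "eta\<^sup>2 * (\<Sum>beta\<in>Om. (norm (grad_map D psi n gf eta (wt beta s t)))\<^sup>2)
        \<le> 2 * (\<Sum>beta\<in>Om. (norm (dd beta s t))\<^sup>2) + 2 * eta\<^sup>2 * (\<Sum>beta\<in>Om. (norm (ee beta s t))\<^sup>2)" .
    qed
    show "gam > 0" by (rule g0)
    show "K \<ge> 0" unfolding K_def using rho_nonneg by simp
    show "K * real m \<le> 2 / 3" unfolding K_def rho_def using key2 by simp
    show "eta\<^sup>2 \<le> 1 / 4" by (rule key3)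
  qed
  moreover have "s = Suc (s - 1)" using s by simp
  then have "snap beta s = wt beta s (Suc m)" for beta using snap_Suc[of beta "s - 1"] by simp
  ultimately show ?thesis by (simp add: wt0)
qed

lemma total_bound:
  assumes bdd: "bdd_below (FF ` D)"
  shows "(\<Sum>s\<in>{1..S}. \<Sum>t\<in>{0..m}. \<Sum>beta\<in>Om. (norm (grad_map D psi n gf eta (wt beta s t)))\<^sup>2)
     \<le> 2 / (gam * eta\<^sup>2) * (real (card Om) * (FF w0 - (INF w\<in>D. FF w)))"
proof -
  define H where "H s = (\<Sum>beta\<in>Om. FF (snap beta s))" for s
  define Gs where "Gs s = (\<Sum>t\<in>{0..m}. \<Sum>beta\<in>Om. (norm (grad_map D psi n gf eta (wt beta s t)))\<^sup>2)" for s
  have c: "gam * eta\<^sup>2 / 2 > 0" using g0 e0 by simp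
  have eb: "gam * eta\<^sup>2 / 2 * Gs s \<le> H (s - 1) - H s" if "s \<in> {1..S}" for s
  proof -
    have "{0..m} = {..<Suc m}" by auto
    then show ?thesis using epoch_bound[OF that] unfolding Gs_def H_def by simp
  qed
  have "gam * eta\<^sup>2 / 2 * (\<Sum>s\<in>{1..S}. Gs s) = (\<Sum>s\<in>{1..S}. gam * eta\<^sup>2 / 2 * Gs s)" by (simp add: sum_distrib_left)
  also have "\<dots> \<le> (\<Sum>s\<in>{1..S}. H (s - 1) - H s)" using eb by (intro sum_mono) auto
  also have "(\<Sum>s\<in>{1..S}. H (s - 1) - H s) = (\<Sum>s<S. H s - H (Suc s))"
  proof -
    have "(\<Sum>s\<in>{1..S}. H (s - 1) - H s) = (\<Sum>s\<in>Suc ` {..<S}. H (s - 1) - H s)"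
      by (simp add: image_Suc_lessThan)
    also have "\<dots> = (\<Sum>s<S. H s - H (Suc s))" by (simp add: sum.reindex)
    finally show ?thesis .
  qed
  also have "\<dots> = H 0 - H S" by (rule sum_lessThan_telescope')
  also have "H 0 = real (card Om) * FF w0" unfolding H_def snap_def by simp
  also have "H S \<ge> real (card Om) * (INF w\<in>D. FF w)"
  proof -
    have "(INF w\<in>D. FF w) \<le> FF (snap beta S)" for beta
      using snap_in_D bdd by (intro cINF_lower) auto
    then have "(\<Sum>beta\<in>Om. (INF w\<in>D. FF w)) \<le> H S" unfolding H_def by (intro sum_mono) auto
    then show ?thesis by simp
  qed
  then have "real (card Om) * FF w0 - H S \<le> real (card Om) * (FF w0 - (INF w\<in>D. FF w))"
    by (simp add: algebra_simps)
  finally have "gam * eta\<^sup>2 / 2 * (\<Sum>s\<in>{1..S}. Gs s) \<le> real (card Om) * (FF w0 - (INF w\<in>D. FF w))" by simp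
  then have "(\<Sum>s\<in>{1..S}. Gs s) \<le> real (card Om) * (FF w0 - (INF w\<in>D. FF w)) / (gam * eta\<^sup>2 / 2)"
    using c by (simp add: field_simps)
  then show ?thesis unfolding Gs_def by (simp add: field_simps)
qed

end



lemma params:
  fixes n b :: nat and L :: real
  assumes n2: "n \<ge> 2" and b1: "1 \<le> b" and bs: "real b \<le> sqrt (real n)" and L: "L > 0"
  defines "x \<equiv> sqrt (ps_omega n b * real (n div b))"
  shows "b * b \<le> n" "b < n" "b \<le> n div b" "n < b * (n div b + 1)" "ps_omega n b > 0" "x > 0"
    "ps_gamma L n b = 1 / (L * x)" "ps_eta n b = 2 * x / (4 * x + 1)"
    "x\<^sup>2 = ps_omega n b * real (n div b)"
    "ps_omega n b = 3 / 2 * ((real n - real b) / (real b * (real n - 1)))"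
    "ps_omega n b \<le> 3 / (2 * real b)" "ps_omega n b \<ge> 3 / (4 * real b)"
proof -
  have "(real b)\<^sup>2 \<le> (sqrt (real n))\<^sup>2" using bs by (intro power_mono) auto
  then have "real (b * b) \<le> real n" by (simp add: power2_eq_square)
  then show bb: "b * b \<le> n" by linarith
  show bn: "b < n"
  proof (rule ccontr)
    assume "\<not> b < n" then have "n \<le> b" by simp
    then have "n * n \<le> b * b" by (simp add: mult_le_mono)
    moreover have "2 * n \<le> n * n" using n2 by (intro mult_right_mono) auto
    ultimately show False using bb n2 by linarith
  qed
  show bm: "b \<le> n div b" using bb b1 by (simp add: less_eq_div_iff_mult_less_eq)
  show "n < b * (n div b + 1)"
  proof -
    have "n div b * b + n mod b = n" by (rule div_mult_mod_eq)
    then have "n = b * (n div b) + n mod b" by (simp add: mult.commute)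
    moreover have "n mod b < b" using b1 by simp
    moreover have "b * (n div b + 1) = b * (n div b) + b" by simp
    ultimately show ?thesis by linarith
  qed
  have nb: "real n - real b > 0" using bn by simp
  have n1: "real n - 1 > 0" using n2 by simp
  show om: "ps_omega n b > 0" unfolding ps_omega_def using nb n1 b1 by simp
  have m0: "real (n div b) > 0" using bm b1 by simp
  show x0: "x > 0" unfolding x_def using om m0 by simp
  show "ps_gamma L n b = 1 / (L * x)" unfolding ps_gamma_def x_def ..
  show "ps_eta n b = 2 * x / (4 * x + 1)" unfolding ps_eta_def x_def ..
  show "x\<^sup>2 = ps_omega n b * real (n div b)" unfolding x_def using om m0 by simp
  show "ps_omega n b = 3 / 2 * ((real n - real b) / (real b * (real n - 1)))"
    unfolding ps_omega_def by (simp add: field_simps)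
  show "ps_omega n b \<le> 3 / (2 * real b)"
    unfolding ps_omega_def using n1 b1 by (simp add: field_simps)
  have "2 * real b \<le> real n + 1"
  proof -
    have "2 * real b \<le> real b * real b + 1"
      using sum_squares_bound[of "real b" 1] by (simp add: power2_eq_square)
    also have "real b * real b \<le> real n" using bb by (metis of_nat_le_iff of_nat_mult)
    finally show ?thesis by simp
  qed
  then have num: "3 * (real n - 1) \<le> 6 * (real n - real b)" by simp
  have den: "4 * real b * (real n - 1) > 0" using n1 b1 by simp
  have "3 / (4 * real b) = 3 * (real n - 1) / (4 * real b * (real n - 1))"
    using n1 by (intro mult_divide_mult_cancel_right[symmetric]) simp
  also have "\<dots> \<le> 6 * (real n - real b) / (4 * real b * (real n - 1))"
    using num den by (intro divide_right_mono) auto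
  also have "\<dots> = ps_omega n b" unfolding ps_omega_def using n1 b1 by (simp add: field_simps)
  finally show "ps_omega n b \<ge> 3 / (4 * real b)" .
qed

lemma const_core:
  fixes x N M :: real
  assumes x0: "x > 0" and N0: "N > 0" and NM: "N \<le> M" and x2: "x\<^sup>2 \<ge> 1 / 4"
    and xN: "x\<^sup>2 * N\<^sup>2 \<le> 3 / 2 * M\<^sup>2"
  shows "(4 * x + 1)\<^sup>2 * N \<le> 30 * x * M"
proof -
  have M0: "M > 0" using N0 NM by simp
  have "(4 * x * N)\<^sup>2 \<le> (5 * M)\<^sup>2"
  proof -
    have "(4 * x * N)\<^sup>2 = 16 * (x\<^sup>2 * N\<^sup>2)" by (simp add: power_mult_distrib)
    also have "\<dots> \<le> 16 * (3 / 2 * M\<^sup>2)" using xN by linarith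
    also have "\<dots> \<le> (5 * M)\<^sup>2" by (simp add: power_mult_distrib)
    finally show ?thesis .
  qed
  then have i: "4 * x * N \<le> 5 * M" by (rule power2_le_imp_le) (use M0 in simp)
  have xh: "x \<ge> 1 / 2"
  proof (rule ccontr)
    assume "\<not> x \<ge> 1 / 2" then have "x < 1 / 2" by simp
    then have "x\<^sup>2 < (1 / 2)\<^sup>2" using x0 by (simp add: power_strict_mono)
    then show False using x2 by (simp add: power2_eq_square)
  qed
  have t1: "16 * x\<^sup>2 * N \<le> 20 * x * M"
  proof -
    have "16 * x\<^sup>2 * N = 4 * x * (4 * x * N)" by (simp add: power2_eq_square)
    also have "\<dots> \<le> 4 * x * (5 * M)" using i x0 by (intro mult_left_mono) auto
    finally show ?thesis by simp
  qed
  have t2: "8 * x * N \<le> 8 * x * M" using NM x0 by simp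
  have t3: "N \<le> 2 * x * M"
  proof -
    have "1 * M \<le> (2 * x) * M" using xh M0 by (intro mult_right_mono) auto
    then show ?thesis using NM by simp
  qed
  have "(4 * x + 1)\<^sup>2 * N = 16 * x\<^sup>2 * N + 8 * x * N + N" by (simp add: power2_eq_square algebra_simps)
  also have "\<dots> \<le> 20 * x * M + 8 * x * M + 2 * x * M" using t1 t2 t3 by linarith
  finally show ?thesis by (simp add: mult.commute mult.left_commute)
qed

lemma const_bound:
  fixes n b S :: nat and L \<Delta> :: real
  assumes n2: "n \<ge> 2" and b1: "1 \<le> b" and bs: "real b \<le> sqrt (real n)" and L: "L > 0"
    and S1: "S \<ge> 1" and D0: "\<Delta> \<ge> 0"
  shows "2 / (ps_gamma L n b * (ps_eta n b)\<^sup>2 * real (n div b + 1) * real S) * \<Delta>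
            \<le> 15 * L * \<Delta> / (real S * sqrt (real n))"
proof -
  define x where "x = sqrt (ps_omega n b * real (n div b))"
  define M where "M = real (n div b + 1)"
  define N where "N = sqrt (real n)"
  note P = params[OF n2 b1 bs L, folded x_def]
  have x0: "x > 0" using P(6) .
  have N0: "N > 0" unfolding N_def using n2 by simp
  have M0: "M > 0" unfolding M_def by simp
  have NN: "N\<^sup>2 = real n" unfolding N_def by simp
  have b0: "real b > 0" using b1 by simp
  have bN: "real b \<le> N" using bs unfolding N_def .
  have nbM: "real n < real b * M"
  proof -
    have "real n < real (b * (n div b + 1))" using P(4) by (simp only: of_nat_less_iff)
    then show ?thesis unfolding M_def by (simp add: algebra_simps)
  qed
  have NM: "N \<le> M"
  proof -
    have "N * N < N * M"
    proof -
      have "N * N = real n" using NN by (simp add: power2_eq_square)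
      also have "\<dots> < real b * M" by (rule nbM)
      also have "\<dots> \<le> N * M" using bN M0 by (intro mult_right_mono) auto
      finally show ?thesis .
    qed
    then show ?thesis using N0 by simp
  qed
  have mb: "real (n div b) \<ge> real b" using P(3) by simp
  have x2: "x\<^sup>2 \<ge> 1 / 4"
  proof -
    have "3 / (4 * real b) * real b \<le> ps_omega n b * real (n div b)"
      using P(12) P(5) mb b0 by (intro mult_mono) auto
    then show ?thesis unfolding P(9) using b0 by simp
  qed
  have xN: "x\<^sup>2 * N\<^sup>2 \<le> 3 / 2 * M\<^sup>2"
  proof -
    have "x\<^sup>2 * N\<^sup>2 = ps_omega n b * real (n div b) * real n" unfolding P(9) NN ..
    also have "\<dots> \<le> 3 / (2 * real b) * real (n div b) * real n"
      using P(11) by (intro mult_right_mono) auto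
    also have "\<dots> = 3 / 2 * real (n div b) * (real n / real b)" by simp
    also have "\<dots> \<le> 3 / 2 * M * M"
    proof -
      have "real n / real b \<le> M" using nbM b0 by (simp add: field_simps)
      moreover have "real (n div b) \<le> M" unfolding M_def by simp
      ultimately show ?thesis using M0 by (intro mult_mono) auto
    qed
    finally show ?thesis by (simp add: power2_eq_square)
  qed
  have core: "(4 * x + 1)\<^sup>2 * N \<le> 30 * x * M" by (rule const_core[OF x0 N0 NM x2 xN])
  have S0: "real S > 0" using S1 by simp
  have eq: "2 / (ps_gamma L n b * (ps_eta n b)\<^sup>2 * real (n div b + 1) * real S)
      = L * (4 * x + 1)\<^sup>2 / (2 * x * M * real S)"
  proof -
    have q0: "4 * x + 1 > 0" using x0 by simp
    have "ps_gamma L n b * (ps_eta n b)\<^sup>2 = 4 * x / (L * (4 * x + 1)\<^sup>2)"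
      unfolding P(7) P(8) using x0 L q0 by (simp add: power_divide power_mult_distrib field_simps power2_eq_square)
    then have "ps_gamma L n b * (ps_eta n b)\<^sup>2 * real (n div b + 1) * real S = 4 * x * M * real S / (L * (4 * x + 1)\<^sup>2)"
      unfolding M_def by simp
    then have "2 / (ps_gamma L n b * (ps_eta n b)\<^sup>2 * real (n div b + 1) * real S) = 2 / (4 * x * M * real S / (L * (4 * x + 1)\<^sup>2))"
      by simp
    also have "\<dots> = L * (4 * x + 1)\<^sup>2 / (2 * x * M * real S)" using x0 L S0 M0 q0 by (simp add: field_simps)
    finally show ?thesis .
  qed
  have "L * (4 * x + 1)\<^sup>2 / (2 * x * M * real S) \<le> 15 * L / (real S * N)"
  proof -
    have "L * ((4 * x + 1)\<^sup>2 * N) \<le> L * (30 * x * M)" using core L by (intro mult_left_mono) auto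
    then have a: "L * (4 * x + 1)\<^sup>2 * N \<le> L * (30 * x * M)" by (simp add: mult.assoc)
    have b: "L * (4 * x + 1)\<^sup>2 \<le> L * (30 * x * M) / N"
      using a N0 by (simp add: pos_le_divide_eq)
    have c: "15 * L / (real S * N) * (2 * x * M * real S) = L * (30 * x * M) / N"
      using S0 N0 by (simp add: field_simps)
    have d: "2 * x * M * real S > 0" using x0 M0 S0 by simp
    show ?thesis using b c d by (simp add: pos_divide_le_eq)
  qed
  then have "2 / (ps_gamma L n b * (ps_eta n b)\<^sup>2 * real (n div b + 1) * real S) * \<Delta>
      \<le> 15 * L / (real S * N) * \<Delta>" unfolding eq using D0 by (intro mult_right_mono) auto
  then show ?thesis unfolding N_def by simp
qed

theorem mainTheorem5:
  fixes f :: "nat \<Rightarrow> 'a::euclidean_space \<Rightarrow> real" and gf :: "nat \<Rightarrow> 'a \<Rightarrow> 'a"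
    and psi :: "'a \<Rightarrow> real" and D :: "'a set"
    and n b S :: nat and L :: real and w0 :: 'a
  assumes n2: "n \<ge> 2"
    and grad: "\<forall>i<n. \<forall>x. (f i has_derivative (\<lambda>h. gf i x \<bullet> h)) (at x)"
    and gcont: "\<forall>i<n. continuous_on UNIV (gf i)"
    and dom_ne: "D \<noteq> {}" and dom_cvx: "convex D" and psi_cvx: "convex_on D psi"
    and psi_closed: "closed {(x, t). x \<in> D \<and> psi x \<le> t}"
    and A1: "bdd_below ((\<lambda>w. (\<Sum>i<n. f i w) / real n + psi w) ` D)"
    and A2: "\<forall>w w'. (\<Sum>i<n. (norm (gf i w - gf i w'))\<^sup>2) / real n \<le> L\<^sup>2 * (norm (w - w'))\<^sup>2"
    and Lpos: "L > 0"
    and b1: "1 \<le> b" and bsqrt: "real b \<le> sqrt (real n)"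
    and S1: "S \<ge> 1"
    and gam1: "ps_gamma L n b \<le> 1"
  shows
   "measure_pmf.expectation
       (pair_pmf (pmf_of_set (batch_space n b S (n div b))) (pmf_of_set ({1..S} \<times> {0..n div b})))
       (\<lambda>(beta, (s, t)). (norm (grad_map D psi n gf (ps_eta n b)
            (sarah_iter D psi n gf b (\<lambda>_. ps_eta n b) (\<lambda>_. ps_gamma L n b) (n div b) beta w0 s t)))\<^sup>2)
    = (1 / (real (n div b + 1) * real S)) *
      (\<Sum>s\<in>{1..S}. \<Sum>t\<in>{0..n div b}. measure_pmf.expectation (pmf_of_set (batch_space n b S (n div b)))
         (\<lambda>beta. (norm (grad_map D psi n gf (ps_eta n b)
            (sarah_iter D psi n gf b (\<lambda>_. ps_eta n b) (\<lambda>_. ps_gamma L n b) (n div b) beta w0 s t)))\<^sup>2))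
   \<and> (w0 \<in> D \<longrightarrow>
      (1 / (real (n div b + 1) * real S)) *
      (\<Sum>s\<in>{1..S}. \<Sum>t\<in>{0..n div b}. measure_pmf.expectation (pmf_of_set (batch_space n b S (n div b)))
         (\<lambda>beta. (norm (grad_map D psi n gf (ps_eta n b)
            (sarah_iter D psi n gf b (\<lambda>_. ps_eta n b) (\<lambda>_. ps_gamma L n b) (n div b) beta w0 s t)))\<^sup>2))
      \<le> 2 / (ps_gamma L n b * (ps_eta n b)\<^sup>2 * real (n div b + 1) * real S) *
         (((\<Sum>i<n. f i w0) / real n + psi w0) - (INF w\<in>D. (\<Sum>i<n. f i w) / real n + psi w)))
   \<and> (\<exists>C::real. C > 0 \<and>
       (\<forall>(n'::nat) (b'::nat) (L'::real) (S'::nat) (\<Delta>::real).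
          n' \<ge> 2 \<and> 1 \<le> b' \<and> real b' \<le> sqrt (real n') \<and> L' > 0 \<and> S' \<ge> 1 \<and>
          ps_gamma L' n' b' \<le> 1 \<and> \<Delta> \<ge> 0 \<longrightarrow>
          2 / (ps_gamma L' n' b' * (ps_eta n' b')\<^sup>2 * real (n' div b' + 1) * real S') * \<Delta>
            \<le> C * L' * \<Delta> / (real S' * sqrt (real n')))
     \<and> (w0 \<in> D \<longrightarrow> (\<forall>\<epsilon>::real. \<epsilon> > 0 \<longrightarrow>
          S = nat \<lceil>C * L * (((\<Sum>i<n. f i w0) / real n + psi w0) - (INF w\<in>D. (\<Sum>i<n. f i w) / real n + psi w))
                     / (sqrt (real n) * \<epsilon>\<^sup>2)\<rceil> \<longrightarrow>
          measure_pmf.expectation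
            (pair_pmf (pmf_of_set (batch_space n b S (n div b))) (pmf_of_set ({1..S} \<times> {0..n div b})))
            (\<lambda>(beta, (s, t)). (norm (grad_map D psi n gf (ps_eta n b)
               (sarah_iter D psi n gf b (\<lambda>_. ps_eta n b) (\<lambda>_. ps_gamma L n b) (n div b) beta w0 s t)))\<^sup>2)
          \<le> \<epsilon>\<^sup>2))
     \<and> (\<exists>C'::real. C' > 0 \<and>
         (\<forall>(n'::nat) (b'::nat) (L'::real) (\<Delta>::real) (\<epsilon>::real) (S'::nat).
            n' \<ge> 2 \<and> 1 \<le> b' \<and> real b' \<le> sqrt (real n') \<and> L' > 0 \<and>
            ps_gamma L' n' b' \<le> 1 \<and> \<Delta> \<ge> 0 \<and> \<epsilon> > 0 \<and>
            S' = nat \<lceil>C * L' * \<Delta> / (sqrt (real n') * \<epsilon>\<^sup>2)\<rceil> \<longrightarrow>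
            real (S' * (n' + 2 * b' * (n' div b'))) \<le> C' * (real n' + sqrt (real n') * L' * \<Delta> / \<epsilon>\<^sup>2))))"

proof -
  define m where "m = n div b"
  define gam where "gam = ps_gamma L n b"
  define eta where "eta = ps_eta n b"
  define x where "x = sqrt (ps_omega n b * real (n div b))"
  note P = params[OF n2 b1 bsqrt Lpos, folded x_def]
  have x0: "x > 0" by (rule P(6))
  have m1: "m \<ge> 1" unfolding m_def using P(3) b1 by simp
  have g0: "gam > 0" unfolding gam_def P(7) using x0 Lpos by simp
  have g1: "gam \<le> 1" unfolding gam_def by (rule gam1)
  have e0: "eta > 0" unfolding eta_def P(8) using x0 by simp
  have key1: "1 / eta - L * gam / 2 = 2"
    unfolding eta_def gam_def P(7) P(8) using x0 Lpos by (simp add: field_simps)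
  have key3: "eta\<^sup>2 \<le> 1 / 4"
  proof -
    have "eta \<le> 1 / 2" unfolding eta_def P(8) using x0 by (simp add: field_simps)
    then have "eta\<^sup>2 \<le> (1 / 2)\<^sup>2" using e0 by (simp add: power_mono)
    then show ?thesis by (simp add: power2_eq_square)
  qed
  have key2: "(real n - real b) / (real b * (real n - 1)) * L\<^sup>2 * gam\<^sup>2 * real m \<le> 2 / 3"
  proof -
    define rho where "rho = (real n - real b) / (real b * (real n - 1))"
    have rho0: "rho > 0" unfolding rho_def using P(2) b1 n2 by simp
    have "L\<^sup>2 * gam\<^sup>2 = 1 / x\<^sup>2" unfolding gam_def P(7) using x0 Lpos by (simp add: field_simps power2_eq_square)
    then have "rho * L\<^sup>2 * gam\<^sup>2 * real m = rho * real m / (ps_omega n b * real m)"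
      unfolding P(9) m_def by (simp add: mult.assoc)
    also have "\<dots> = rho / ps_omega n b" using m1 by simp
    also have "\<dots> = 2 / 3" unfolding P(10) rho_def[symmetric] using rho0 by simp
    finally show ?thesis unfolding rho_def by simp
  qed
  define Om where "Om = batch_space n b S m"
  define Bs where "Bs = {B. B \<subseteq> {..<n} \<and> card B = b}"
  have finOm: "finite Om" unfolding Om_def batch_space_def using finite_Bs[of n b] by (intro finite_PiE) auto
  have Bsne: "Bs \<noteq> {}"
  proof -
    have "card Bs = n choose b" unfolding Bs_def using n_subsets[of "{..<n}" b] by simp
    moreover have "n choose b > 0" using P(2) by simp
    ultimately show ?thesis by (metis card.empty less_irrefl)
  qed
  have Omne: "Om \<noteq> {}" unfolding Om_def batch_space_def using Bsne unfolding Bs_def by (simp add: PiE_eq_empty_iff)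
  define Gf where "Gf beta s t = (norm (grad_map D psi n gf (ps_eta n b)
            (sarah_iter D psi n gf b (\<lambda>_. ps_eta n b) (\<lambda>_. ps_gamma L n b) (n div b) beta w0 s t)))\<^sup>2" for beta s t
  define Fst where "Fst = (INF w\<in>D. (\<Sum>i<n. f i w) / real n + psi w)"
  define F0 where "F0 = (\<Sum>i<n. f i w0) / real n + psi w0"
  have Tne: "{1..S} \<times> {0..n div b} \<noteq> {}" using S1 by auto
  have part1: "measure_pmf.expectation
       (pair_pmf (pmf_of_set (batch_space n b S (n div b))) (pmf_of_set ({1..S} \<times> {0..n div b})))
       (\<lambda>(beta, (s, t)). Gf beta s t)
    = (1 / (real (n div b + 1) * real S)) *
      (\<Sum>s\<in>{1..S}. \<Sum>t\<in>{0..n div b}. measure_pmf.expectation (pmf_of_set (batch_space n b S (n div b)))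
         (\<lambda>beta. Gf beta s t))"
  proof -
    have "measure_pmf.expectation
       (pair_pmf (pmf_of_set (batch_space n b S (n div b))) (pmf_of_set ({1..S} \<times> {0..n div b})))
       (\<lambda>(beta, (s, t)). Gf beta s t)
      = (1 / real (card ({1..S} \<times> {0..n div b}))) * (\<Sum>y\<in>{1..S} \<times> {0..n div b}.
          measure_pmf.expectation (pmf_of_set (batch_space n b S (n div b))) (\<lambda>beta. (\<lambda>(beta, (s, t)). Gf beta s t) (beta, y)))"
      by (rule expectation_pair_uniform) (use finOm Omne Tne in \<open>auto simp: Om_def m_def\<close>)
    also have "(\<Sum>y\<in>{1..S} \<times> {0..n div b}.
          measure_pmf.expectation (pmf_of_set (batch_space n b S (n div b))) (\<lambda>beta. (\<lambda>(beta, (s, t)). Gf beta s t) (beta, y)))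
        = (\<Sum>s\<in>{1..S}. \<Sum>t\<in>{0..n div b}. measure_pmf.expectation (pmf_of_set (batch_space n b S (n div b))) (\<lambda>beta. Gf beta s t))"
      by (simp add: sum.cartesian_product split_beta)
    also have "real (card ({1..S} \<times> {0..n div b})) = real (n div b + 1) * real S"
      by (simp add: card_cartesian_product algebra_simps)
    finally show ?thesis .
  qed
  have part2: "w0 \<in> D \<longrightarrow>
      (1 / (real (n div b + 1) * real S)) *
      (\<Sum>s\<in>{1..S}. \<Sum>t\<in>{0..n div b}. measure_pmf.expectation (pmf_of_set (batch_space n b S (n div b)))
         (\<lambda>beta. Gf beta s t))
      \<le> 2 / (ps_gamma L n b * (ps_eta n b)\<^sup>2 * real (n div b + 1) * real S) * (F0 - Fst)"
  proof
    assume w0D: "w0 \<in> D"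
    interpret I: psx f gf psi D n b S m L gam eta w0
      by unfold_locales (use n2 grad dom_ne psi_cvx psi_closed A2 Lpos b1 P(2) m1 g0 g1 e0 key1 key2 key3 w0D in auto)
    have OmI: "I.Om = Om" unfolding I.Om_def Om_def batch_space_def I.Bs_def ..
    have GfI: "Gf beta s t = (norm (grad_map D psi n gf eta (I.wt beta s t)))\<^sup>2" for beta s t
      unfolding Gf_def I.wt_def I.inn_def I.snap_def sarah_iter_def by (simp add: eta_def gam_def m_def)
    have FFe: "I.FF = (\<lambda>w. (\<Sum>i<n. f i w) / real n + psi w)" unfolding I.FF_def I.fb_def by auto
    have bdd: "bdd_below (I.FF ` D)" unfolding FFe by (rule A1)
    have cpos: "real (card Om) > 0" using finOm Omne by (simp add: card_gt_0_iff)
    have "(\<Sum>s\<in>{1..S}. \<Sum>t\<in>{0..n div b}. measure_pmf.expectation (pmf_of_set (batch_space n b S (n div b)))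
         (\<lambda>beta. Gf beta s t))
       = (\<Sum>s\<in>{1..S}. \<Sum>t\<in>{0..m}. \<Sum>beta\<in>I.Om. (norm (grad_map D psi n gf eta (I.wt beta s t)))\<^sup>2) / real (card Om)"
      unfolding OmI GfI m_def[symmetric] Om_def[symmetric]
      using finOm Omne by (simp add: integral_pmf_of_set sum_divide_distrib)
    also have "\<dots> \<le> 2 / (gam * eta\<^sup>2) * (real (card Om) * (F0 - Fst)) / real (card Om)"
    proof -
      have tb: "(\<Sum>s\<in>{1..S}. \<Sum>t\<in>{0..m}. \<Sum>beta\<in>I.Om. (norm (grad_map D psi n gf eta (I.wt beta s t)))\<^sup>2)
         \<le> 2 / (gam * eta\<^sup>2) * (real (card Om) * (F0 - Fst))"
        using I.total_bound[OF bdd] unfolding OmI FFe F0_def Fst_def .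
      show ?thesis by (rule divide_right_mono[OF tb]) simp
    qed
    also have "\<dots> = 2 / (gam * eta\<^sup>2) * (F0 - Fst)" using cpos by simp
    finally have h: "(\<Sum>s\<in>{1..S}. \<Sum>t\<in>{0..n div b}. measure_pmf.expectation (pmf_of_set (batch_space n b S (n div b)))
         (\<lambda>beta. Gf beta s t)) \<le> 2 / (gam * eta\<^sup>2) * (F0 - Fst)" .
    have pos: "1 / (real (n div b + 1) * real S) \<ge> 0" by simp
    have "(1 / (real (n div b + 1) * real S)) * (\<Sum>s\<in>{1..S}. \<Sum>t\<in>{0..n div b}. measure_pmf.expectation (pmf_of_set (batch_space n b S (n div b)))
         (\<lambda>beta. Gf beta s t)) \<le> (1 / (real (n div b + 1) * real S)) * (2 / (gam * eta\<^sup>2) * (F0 - Fst))"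
      by (rule mult_left_mono[OF h pos])
    also have "\<dots> = 2 / (ps_gamma L n b * (ps_eta n b)\<^sup>2 * real (n div b + 1) * real S) * (F0 - Fst)"
      unfolding gam_def eta_def by (simp add: field_simps)
    finally show "(1 / (real (n div b + 1) * real S)) *
      (\<Sum>s\<in>{1..S}. \<Sum>t\<in>{0..n div b}. measure_pmf.expectation (pmf_of_set (batch_space n b S (n div b)))
         (\<lambda>beta. Gf beta s t))
      \<le> 2 / (ps_gamma L n b * (ps_eta n b)\<^sup>2 * real (n div b + 1) * real S) * (F0 - Fst)" .
  qed
  have part3: "\<forall>(n'::nat) (b'::nat) (L'::real) (S'::nat) (\<Delta>::real).
          n' \<ge> 2 \<and> 1 \<le> b' \<and> real b' \<le> sqrt (real n') \<and> L' > 0 \<and> S' \<ge> 1 \<and>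
          ps_gamma L' n' b' \<le> 1 \<and> \<Delta> \<ge> 0 \<longrightarrow>
          2 / (ps_gamma L' n' b' * (ps_eta n' b')\<^sup>2 * real (n' div b' + 1) * real S') * \<Delta>
            \<le> 15 * L' * \<Delta> / (real S' * sqrt (real n'))"
    using const_bound by blast
  have part4: "w0 \<in> D \<longrightarrow> (\<forall>\<epsilon>::real. \<epsilon> > 0 \<longrightarrow>
          S = nat \<lceil>15 * L * (F0 - Fst) / (sqrt (real n) * \<epsilon>\<^sup>2)\<rceil> \<longrightarrow>
          measure_pmf.expectation
            (pair_pmf (pmf_of_set (batch_space n b S (n div b))) (pmf_of_set ({1..S} \<times> {0..n div b})))
            (\<lambda>(beta, (s, t)). Gf beta s t) \<le> \<epsilon>\<^sup>2)"
  proof (intro impI allI)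
    fix \<epsilon> :: real assume w0D: "w0 \<in> D" and ep: "\<epsilon> > 0"
      and Seq: "S = nat \<lceil>15 * L * (F0 - Fst) / (sqrt (real n) * \<epsilon>\<^sup>2)\<rceil>"
    have "Fst \<le> F0" unfolding F0_def Fst_def
      using cINF_lower[OF A1 w0D] by simp
    then have D0: "F0 - Fst \<ge> 0" by simp
    have Sge: "real S \<ge> 15 * L * (F0 - Fst) / (sqrt (real n) * \<epsilon>\<^sup>2)"
      unfolding Seq by linarith
    have S0: "real S > 0" using S1 by simp
    have N0: "sqrt (real n) > 0" using n2 by simp
    have "measure_pmf.expectation
            (pair_pmf (pmf_of_set (batch_space n b S (n div b))) (pmf_of_set ({1..S} \<times> {0..n div b})))
            (\<lambda>(beta, (s, t)). Gf beta s t)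
        \<le> 2 / (ps_gamma L n b * (ps_eta n b)\<^sup>2 * real (n div b + 1) * real S) * (F0 - Fst)"
      using part1 part2 w0D by simp
    also have "\<dots> \<le> 15 * L * (F0 - Fst) / (real S * sqrt (real n))"
      by (rule const_bound[OF n2 b1 bsqrt Lpos S1 D0])
    also have "\<dots> \<le> \<epsilon>\<^sup>2"
    proof -
      have "15 * L * (F0 - Fst) / sqrt (real n) \<le> real S * \<epsilon>\<^sup>2"
        using Sge ep N0 by (simp add: field_simps)
      then show ?thesis using S0 N0 by (simp add: field_simps)
    qed
    finally show "measure_pmf.expectation
            (pair_pmf (pmf_of_set (batch_space n b S (n div b))) (pmf_of_set ({1..S} \<times> {0..n div b})))
            (\<lambda>(beta, (s, t)). Gf beta s t) \<le> \<epsilon>\<^sup>2" .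
  qed
  have part5: "\<exists>C'::real. C' > 0 \<and>
         (\<forall>(n'::nat) (b'::nat) (L'::real) (\<Delta>::real) (\<epsilon>::real) (S'::nat).
            n' \<ge> 2 \<and> 1 \<le> b' \<and> real b' \<le> sqrt (real n') \<and> L' > 0 \<and>
            ps_gamma L' n' b' \<le> 1 \<and> \<Delta> \<ge> 0 \<and> \<epsilon> > 0 \<and>
            S' = nat \<lceil>15 * L' * \<Delta> / (sqrt (real n') * \<epsilon>\<^sup>2)\<rceil> \<longrightarrow>
            real (S' * (n' + 2 * b' * (n' div b'))) \<le> C' * (real n' + sqrt (real n') * L' * \<Delta> / \<epsilon>\<^sup>2))"
  proof (intro exI[of _ 45] conjI allI impI)
    fix n' b' :: nat and L' \<Delta> \<epsilon> :: real and S' :: nat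
    assume h: "n' \<ge> 2 \<and> 1 \<le> b' \<and> real b' \<le> sqrt (real n') \<and> L' > 0 \<and>
            ps_gamma L' n' b' \<le> 1 \<and> \<Delta> \<ge> 0 \<and> \<epsilon> > 0 \<and>
            S' = nat \<lceil>15 * L' * \<Delta> / (sqrt (real n') * \<epsilon>\<^sup>2)\<rceil>"
    then have n2': "n' \<ge> 2" and L': "L' > 0" and D0: "\<Delta> \<ge> 0" and ep: "\<epsilon> > 0"
      and Seq: "S' = nat \<lceil>15 * L' * \<Delta> / (sqrt (real n') * \<epsilon>\<^sup>2)\<rceil>" by auto
    define N where "N = sqrt (real n')"
    have N0: "N > 0" unfolding N_def using n2' by simp
    have NN: "N * N = real n'" unfolding N_def by simp
    define y where "y = 15 * L' * \<Delta> / (N * \<epsilon>\<^sup>2)"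
    have y0: "y \<ge> 0" unfolding y_def using L' D0 N0 ep by simp
    have Sle: "real S' \<le> y + 1" unfolding Seq N_def[symmetric] y_def[symmetric] using y0 by linarith
    have bm: "b' * (n' div b') \<le> n'" by (simp add: mult.commute)
    have "real (S' * (n' + 2 * b' * (n' div b'))) \<le> real S' * (3 * real n')"
    proof -
      have "n' + 2 * b' * (n' div b') \<le> 3 * n'" using bm by simp
      then have "real (n' + 2 * b' * (n' div b')) \<le> 3 * real n'" by linarith
      then show ?thesis by (simp add: mult_left_mono)
    qed
    also have "\<dots> \<le> (y + 1) * (3 * real n')" using Sle by (intro mult_right_mono) auto
    also have "\<dots> = 45 * (N * L' * \<Delta> / \<epsilon>\<^sup>2) + 3 * real n'"
    proof -
      have "y * real n' = 15 * (N * L' * \<Delta> / \<epsilon>\<^sup>2)" unfolding y_def NN[symmetric]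
        using N0 ep by (simp add: field_simps)
      moreover have "(y + 1) * (3 * real n') = 3 * (y * real n') + 3 * real n'" by (simp add: algebra_simps)
      ultimately show ?thesis by simp
    qed
    also have "\<dots> \<le> 45 * (real n' + N * L' * \<Delta> / \<epsilon>\<^sup>2)" by simp
    finally show "real (S' * (n' + 2 * b' * (n' div b'))) \<le> 45 * (real n' + sqrt (real n') * L' * \<Delta> / \<epsilon>\<^sup>2)"
      unfolding N_def .
  qed simp
  have c15: "(15::real) > 0" by simp
  have ex: "\<exists>C::real. C > 0 \<and> (\<forall>(n'::nat) (b'::nat) (L'::real) (S'::nat) (\<Delta>::real).
          n' \<ge> 2 \<and> 1 \<le> b' \<and> real b' \<le> sqrt (real n') \<and> L' > 0 \<and> S' \<ge> 1 \<and>
          ps_gamma L' n' b' \<le> 1 \<and> \<Delta> \<ge> 0 \<longrightarrow>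
          2 / (ps_gamma L' n' b' * (ps_eta n' b')\<^sup>2 * real (n' div b' + 1) * real S') * \<Delta>
            \<le> C * L' * \<Delta> / (real S' * sqrt (real n')))
     \<and> (w0 \<in> D \<longrightarrow> (\<forall>\<epsilon>::real. \<epsilon> > 0 \<longrightarrow>
          S = nat \<lceil>C * L * (F0 - Fst) / (sqrt (real n) * \<epsilon>\<^sup>2)\<rceil> \<longrightarrow>
          measure_pmf.expectation
            (pair_pmf (pmf_of_set (batch_space n b S (n div b))) (pmf_of_set ({1..S} \<times> {0..n div b})))
            (\<lambda>(beta, (s, t)). Gf beta s t) \<le> \<epsilon>\<^sup>2))
     \<and> (\<exists>C'::real. C' > 0 \<and>
         (\<forall>(n'::nat) (b'::nat) (L'::real) (\<Delta>::real) (\<epsilon>::real) (S'::nat).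
            n' \<ge> 2 \<and> 1 \<le> b' \<and> real b' \<le> sqrt (real n') \<and> L' > 0 \<and>
            ps_gamma L' n' b' \<le> 1 \<and> \<Delta> \<ge> 0 \<and> \<epsilon> > 0 \<and>
            S' = nat \<lceil>C * L' * \<Delta> / (sqrt (real n') * \<epsilon>\<^sup>2)\<rceil> \<longrightarrow>
            real (S' * (n' + 2 * b' * (n' div b'))) \<le> C' * (real n' + sqrt (real n') * L' * \<Delta> / \<epsilon>\<^sup>2)))"
    by (rule exI[of _ 15], intro conjI c15 part3 part4 part5)
  show ?thesis using conjI[OF part1 conjI[OF part2 ex]] unfolding Gf_def F0_def Fst_def .
qed


end
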